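(* Let $\Lambda$ be a finite $k$-graph without sources and let $C$ be a positive component which is $F$-harmonic for some well chosen sequence $F$. Then $C$ is $\tilde F$-harmonic for every well chosen sequence $\tilde F$, and $x_F^C=x_{\tilde F}^C$.
   Context: A $k$-graph $(\Lambda,d)$ is a countable small category with functor $d:\Lambda\to\mathbb N^k$ having the unique factorisation property (for $d(\lambda)=m+n$ there are unique $\mu,\nu$ with $d(\mu)=m,d(\nu)=n,\lambda=\mu\nu$). $\Lambda^0=d^{-1}(0)$ are the vertices, $\Lambda^n=d^{-1}(n)$, $r,s$ range and source, $v\Lambda^nw=\{\lambda\in\Lambda^n:r(\lambda)=v,s(\lambda)=w\}$, $v\Lambda w=\bigcup_nv\Lambda^nw$, and for $V,W\subseteq\Lambda^0$, $V\Lambda W=\bigcup_{v\in V,w\in W}v\Lambda w$. Finite: each $\Lambda^n$ finite; without sources: $v\Lambda^n\neq\emptyset$ for all $v,n$. Vertex matrices $A_i(v,w)=|v\Lambda^{e_i}w|$, $A^n=\prod_iA_i^{n_i}$. Define $v\le w$ iff $v\Lambda w\ne\emptyset$ and $v\sim w$ iff $v\le w$ and $w\le v$; the classes are components. A component $C$ is trivial if $C\Lambda C=\{v\}$ for a single vertex, non-trivial otherwise; positive if $\rho(A_i^C)>0$ for all $i$. $\overline V=\{w\in\Lambda^0:w\Lambda V\ne\emptyset\}$. For a matrix $B$ and $R,S\subseteq\Lambda^0$, $B^{R,S}$ is the submatrix with rows $R$, columns $S$, $B^S=B^{S,S}$; $\rho$ is spectral radius. For a finite sequence $F=(a_1,\dots,a_m)$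 in $\mathbb N^k\setminus\{0\}$ (repetitions allowed), $A_F=\sum_jA^{a_j}$; $F$ is well chosen if $A_F(v,w)>0$ iff $v\Lambda^lw\ne\emptyset$ for some $l\ne0$. A non-trivial component $C$ is $F$-harmonic if $\overline C\setminus C=\emptyset$ or $\rho(A_F^C)>\rho(A_F^{\overline C\setminus C})$. For an $F$-harmonic $C$, $x_F^C$ is the unique vector in $[0,\infty)^{\Lambda^0}$ of unit $1$-norm with $A_Fx_F^C=\rho(A_F^C)x_F^C$ and $(x_F^C)_v=0$ for $v\notin\overline C$. *)

theory Defs
  imports Complex_Main "HOL-Library.Countable_Set"
begin

text \<open>Degrees: elements of N^k are represented as functions nat => nat vanishing
  from index k on.  A k-graph is given by its set of morphisms L, range r, source s,
  composition cmp (cmp mu nu is defined, i.e. meaningful, when s mu = r nu), and the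
  degree functor d.  Objects are identified with identity morphisms.\<close>

definition degs :: "nat \<Rightarrow> (nat \<Rightarrow> nat) set" where
  "degs k = {n. \<forall>i\<ge>k. n i = 0}"

definition unitdeg :: "nat \<Rightarrow> nat \<Rightarrow> nat" where
  "unitdeg i = (\<lambda>j. if j = i then 1 else 0)"

definition kgraph :: "nat \<Rightarrow> 'a set \<Rightarrow> ('a \<Rightarrow> 'a) \<Rightarrow> ('a \<Rightarrow> 'a)
    \<Rightarrow> ('a \<Rightarrow> 'a \<Rightarrow> 'a) \<Rightarrow> ('a \<Rightarrow> nat \<Rightarrow> nat) \<Rightarrow> bool" where
  "kgraph k L r s cmp d \<longleftrightarrow>
     countable L \<and>
     (\<forall>l\<in>L. r l \<in> L \<and> s l \<in> L \<and> d l \<in> degs k) \<and>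
     (\<forall>l\<in>L. r (r l) = r l \<and> s (r l) = r l \<and> r (s l) = s l \<and> s (s l) = s l) \<and>
     (\<forall>l\<in>L. cmp (r l) l = l \<and> cmp l (s l) = l) \<and>
     (\<forall>m\<in>L. \<forall>n\<in>L. s m = r n \<longrightarrow>
        cmp m n \<in> L \<and> r (cmp m n) = r m \<and> s (cmp m n) = s n) \<and>
     (\<forall>a\<in>L. \<forall>b\<in>L. \<forall>c\<in>L. s a = r b \<and> s b = r c \<longrightarrow>
        cmp (cmp a b) c = cmp a (cmp b c)) \<and>
     (\<forall>l\<in>L. d (r l) = (\<lambda>_. 0)) \<and>
     (\<forall>m\<in>L. \<forall>n\<in>L. s m = r n \<longrightarrow> d (cmp m n) = (\<lambda>i. d m i + d n i)) \<and>
     (\<forall>l\<in>L. \<forall>m n. d l = (\<lambda>i. m i + n i) \<longrightarrow>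
        (\<exists>!p. fst p \<in> L \<and> snd p \<in> L \<and> s (fst p) = r (snd p) \<and>
              d (fst p) = m \<and> d (snd p) = n \<and> l = cmp (fst p) (snd p)))"

definition paths_deg :: "'a set \<Rightarrow> ('a \<Rightarrow> nat \<Rightarrow> nat) \<Rightarrow> (nat \<Rightarrow> nat) \<Rightarrow> 'a set" where
  "paths_deg L d n = {l\<in>L. d l = n}"

definition verts :: "'a set \<Rightarrow> ('a \<Rightarrow> nat \<Rightarrow> nat) \<Rightarrow> 'a set" where
  "verts L d = paths_deg L d (\<lambda>_. 0)"

definition finite_kgraph :: "'a set \<Rightarrow> ('a \<Rightarrow> nat \<Rightarrow> nat) \<Rightarrow> bool" where
  "finite_kgraph L d \<longleftrightarrow> (\<forall>n. finite (paths_deg L d n))"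

definition no_sources :: "nat \<Rightarrow> 'a set \<Rightarrow> ('a \<Rightarrow> 'a) \<Rightarrow> ('a \<Rightarrow> nat \<Rightarrow> nat) \<Rightarrow> bool" where
  "no_sources k L r d \<longleftrightarrow>
     (\<forall>v\<in>verts L d. \<forall>n\<in>degs k. {l\<in>paths_deg L d n. r l = v} \<noteq> {})"

text \<open>Matrices indexed by vertices: functions, only entries on the vertex set matter.\<close>
definition mmult :: "'a set \<Rightarrow> ('a \<Rightarrow> 'a \<Rightarrow> real) \<Rightarrow> ('a \<Rightarrow> 'a \<Rightarrow> real) \<Rightarrow> 'a \<Rightarrow> 'a \<Rightarrow> real" where
  "mmult V B C = (\<lambda>v w. \<Sum>u\<in>V. B v u * C u w)"

definition mone :: "'a \<Rightarrow> 'a \<Rightarrow> real" where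
  "mone = (\<lambda>v w. if v = w then 1 else 0)"

fun mpow :: "'a set \<Rightarrow> ('a \<Rightarrow> 'a \<Rightarrow> real) \<Rightarrow> nat \<Rightarrow> 'a \<Rightarrow> 'a \<Rightarrow> real" where
  "mpow V B 0 = mone"
| "mpow V B (Suc n) = mmult V (mpow V B n) B"

definition vmat :: "'a set \<Rightarrow> ('a \<Rightarrow> 'a) \<Rightarrow> ('a \<Rightarrow> 'a) \<Rightarrow> ('a \<Rightarrow> nat \<Rightarrow> nat)
    \<Rightarrow> nat \<Rightarrow> 'a \<Rightarrow> 'a \<Rightarrow> real" where
  "vmat L r s d i = (\<lambda>v w. real (card {l\<in>paths_deg L d (unitdeg i). r l = v \<and> s l = w}))"

definition vmat_pow :: "nat \<Rightarrow> 'a set \<Rightarrow> ('a \<Rightarrow> 'a) \<Rightarrow> ('a \<Rightarrow> 'a) \<Rightarrow> ('a \<Rightarrow> nat \<Rightarrow> nat)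
    \<Rightarrow> (nat \<Rightarrow> nat) \<Rightarrow> 'a \<Rightarrow> 'a \<Rightarrow> real" where
  "vmat_pow k L r s d n =
     foldr (\<lambda>i M. mmult (verts L d) (mpow (verts L d) (vmat L r s d i) (n i)) M) [0..<k] mone"

definition AF :: "nat \<Rightarrow> 'a set \<Rightarrow> ('a \<Rightarrow> 'a) \<Rightarrow> ('a \<Rightarrow> 'a) \<Rightarrow> ('a \<Rightarrow> nat \<Rightarrow> nat)
    \<Rightarrow> (nat \<Rightarrow> nat) list \<Rightarrow> 'a \<Rightarrow> 'a \<Rightarrow> real" where
  "AF k L r s d F = (\<lambda>v w. \<Sum>a\<leftarrow>F. vmat_pow k L r s d a v w)"

definition well_chosen :: "nat \<Rightarrow> 'a set \<Rightarrow> ('a \<Rightarrow> 'a) \<Rightarrow> ('a \<Rightarrow> 'a) \<Rightarrow> ('a \<Rightarrow> nat \<Rightarrow> nat)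
    \<Rightarrow> (nat \<Rightarrow> nat) list \<Rightarrow> bool" where
  "well_chosen k L r s d F \<longleftrightarrow>
     (\<forall>a\<in>set F. a \<in> degs k \<and> a \<noteq> (\<lambda>_. 0)) \<and>
     (\<forall>v\<in>verts L d. \<forall>w\<in>verts L d.
        AF k L r s d F v w > 0 \<longleftrightarrow>
        (\<exists>l\<in>degs k. l \<noteq> (\<lambda>_. 0) \<and> {p\<in>paths_deg L d l. r p = v \<and> s p = w} \<noteq> {}))"

text \<open>Spectral radius of the submatrix B^S (S finite): largest modulus of a complex
  eigenvalue of B^S (0 if there is none, i.e. S empty).\<close>
definition eigvals :: "'a set \<Rightarrow> ('a \<Rightarrow> 'a \<Rightarrow> real) \<Rightarrow> complex set" where
  "eigvals S B = {\<mu>. \<exists>x::'a \<Rightarrow> complex. (\<exists>v\<in>S. x v \<noteq> 0) \<and>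
       (\<forall>v\<in>S. (\<Sum>w\<in>S. complex_of_real (B v w) * x w) = \<mu> * x v)}"

definition spec_rad :: "'a set \<Rightarrow> ('a \<Rightarrow> 'a \<Rightarrow> real) \<Rightarrow> real" where
  "spec_rad S B = Sup (insert 0 (cmod ` eigvals S B))"

definition vle :: "'a set \<Rightarrow> ('a \<Rightarrow> 'a) \<Rightarrow> ('a \<Rightarrow> 'a) \<Rightarrow> 'a \<Rightarrow> 'a \<Rightarrow> bool" where
  "vle L r s v w \<longleftrightarrow> (\<exists>l\<in>L. r l = v \<and> s l = w)"

definition vsim :: "'a set \<Rightarrow> ('a \<Rightarrow> 'a) \<Rightarrow> ('a \<Rightarrow> 'a) \<Rightarrow> 'a \<Rightarrow> 'a \<Rightarrow> bool" where
  "vsim L r s v w \<longleftrightarrow> vle L r s v w \<and> vle L r s w v"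

definition is_component :: "'a set \<Rightarrow> ('a \<Rightarrow> 'a) \<Rightarrow> ('a \<Rightarrow> 'a) \<Rightarrow> ('a \<Rightarrow> nat \<Rightarrow> nat)
    \<Rightarrow> 'a set \<Rightarrow> bool" where
  "is_component L r s d C \<longleftrightarrow>
     (\<exists>v\<in>verts L d. C = {w\<in>verts L d. vsim L r s v w})"

definition trivial_comp :: "'a set \<Rightarrow> ('a \<Rightarrow> 'a) \<Rightarrow> ('a \<Rightarrow> 'a) \<Rightarrow> 'a set \<Rightarrow> bool" where
  "trivial_comp L r s C \<longleftrightarrow> (\<exists>v. {l\<in>L. r l \<in> C \<and> s l \<in> C} = {v})"

definition positive_comp :: "nat \<Rightarrow> 'a set \<Rightarrow> ('a \<Rightarrow> 'a) \<Rightarrow> ('a \<Rightarrow> 'a) \<Rightarrow> ('a \<Rightarrow> nat \<Rightarrow> nat)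
    \<Rightarrow> 'a set \<Rightarrow> bool" where
  "positive_comp k L r s d C \<longleftrightarrow> (\<forall>i<k. spec_rad C (vmat L r s d i) > 0)"

definition vclosure :: "'a set \<Rightarrow> ('a \<Rightarrow> 'a) \<Rightarrow> ('a \<Rightarrow> 'a) \<Rightarrow> ('a \<Rightarrow> nat \<Rightarrow> nat)
    \<Rightarrow> 'a set \<Rightarrow> 'a set" where
  "vclosure L r s d V = {w\<in>verts L d. \<exists>l\<in>L. r l = w \<and> s l \<in> V}"

definition harmonic :: "nat \<Rightarrow> 'a set \<Rightarrow> ('a \<Rightarrow> 'a) \<Rightarrow> ('a \<Rightarrow> 'a) \<Rightarrow> ('a \<Rightarrow> nat \<Rightarrow> nat)
    \<Rightarrow> (nat \<Rightarrow> nat) list \<Rightarrow> 'a set \<Rightarrow> bool" where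
  "harmonic k L r s d F C \<longleftrightarrow>
     \<not> trivial_comp L r s C \<and>
     (vclosure L r s d C - C = {} \<or>
      spec_rad C (AF k L r s d F) > spec_rad (vclosure L r s d C - C) (AF k L r s d F))"

definition is_harm_vec :: "nat \<Rightarrow> 'a set \<Rightarrow> ('a \<Rightarrow> 'a) \<Rightarrow> ('a \<Rightarrow> 'a) \<Rightarrow> ('a \<Rightarrow> nat \<Rightarrow> nat)
    \<Rightarrow> (nat \<Rightarrow> nat) list \<Rightarrow> 'a set \<Rightarrow> ('a \<Rightarrow> real) \<Rightarrow> bool" where
  "is_harm_vec k L r s d F C x \<longleftrightarrow>
     (\<forall>v. v \<notin> verts L d \<longrightarrow> x v = 0) \<and>
     (\<forall>v. x v \<ge> 0) \<and>
     (\<Sum>v\<in>verts L d. x v) = 1 \<and>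
     (\<forall>v\<in>verts L d. (\<Sum>w\<in>verts L d. AF k L r s d F v w * x w)
          = spec_rad C (AF k L r s d F) * x v) \<and>
     (\<forall>v\<in>verts L d. v \<notin> vclosure L r s d C \<longrightarrow> x v = 0)"

definition harm_vec :: "nat \<Rightarrow> 'a set \<Rightarrow> ('a \<Rightarrow> 'a) \<Rightarrow> ('a \<Rightarrow> 'a) \<Rightarrow> ('a \<Rightarrow> nat \<Rightarrow> nat)
    \<Rightarrow> (nat \<Rightarrow> nat) list \<Rightarrow> 'a set \<Rightarrow> 'a \<Rightarrow> real" where
  "harm_vec k L r s d F C = (THE x. is_harm_vec k L r s d F C x)"

end

theory Submission
  imports Defs
begin

lemma max_attained:
  fixes f :: "'a \<Rightarrow> real"
  assumes "finite S" "S \<noteq> {}"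
  obtains v0 where "v0 \<in> S" "\<forall>w\<in>S. f w \<le> f v0"
proof -
  have "Max (f ` S) \<in> f ` S" using assms by simp
  then obtain v0 where "v0 \<in> S" "f v0 = Max (f ` S)" by auto
  moreover have "\<forall>w\<in>S. f w \<le> Max (f ` S)" using assms by simp
  ultimately show ?thesis using that by auto
qed

lemma min_attained:
  fixes f :: "'a \<Rightarrow> real"
  assumes "finite S" "S \<noteq> {}"
  obtains v0 where "v0 \<in> S" "\<forall>w\<in>S. f v0 \<le> f w"
  using max_attained[OF assms, of "\<lambda>w. - f w"] by auto

lemma eig_bound:
  fixes B :: "'a \<Rightarrow> 'a \<Rightarrow> real"
  assumes fin: "finite S" and nz: "\<exists>v\<in>S. x v \<noteq> 0"
    and eq: "\<forall>v\<in>S. (\<Sum>w\<in>S. complex_of_real (B v w) * x w) = \<mu> * x v"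
  shows "cmod \<mu> \<le> (\<Sum>v\<in>S. \<Sum>w\<in>S. \<bar>B v w\<bar>)"
proof -
  have ne: "S \<noteq> {}" using nz by auto
  obtain v0 where v0: "v0 \<in> S" "\<forall>w\<in>S. cmod (x w) \<le> cmod (x v0)"
    using max_attained[OF fin ne, of "\<lambda>w. cmod (x w)"] by auto
  have m0: "cmod (x v0) > 0" using nz v0 by (metis norm_ge_zero norm_le_zero_iff not_le order_trans)
  have "cmod \<mu> * cmod (x v0) = cmod (\<Sum>w\<in>S. complex_of_real (B v0 w) * x w)"
    using eq v0 by (simp add: norm_mult)
  also have "\<dots> \<le> (\<Sum>w\<in>S. \<bar>B v0 w\<bar> * cmod (x w))"
    by (rule order_trans[OF norm_sum]) (simp add: norm_mult)
  also have "\<dots> \<le> (\<Sum>w\<in>S. \<bar>B v0 w\<bar> * cmod (x v0))"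
    by (rule sum_mono) (simp add: v0 mult_left_mono)
  also have "\<dots> = (\<Sum>w\<in>S. \<bar>B v0 w\<bar>) * cmod (x v0)" by (simp add: sum_distrib_right)
  also have "\<dots> \<le> (\<Sum>v\<in>S. \<Sum>w\<in>S. \<bar>B v w\<bar>) * cmod (x v0)"
  proof (rule mult_right_mono)
    show "(\<Sum>w\<in>S. \<bar>B v0 w\<bar>) \<le> (\<Sum>v\<in>S. \<Sum>w\<in>S. \<bar>B v w\<bar>)"
      by (rule member_le_sum[OF v0(1)]) (auto intro: sum_nonneg simp: fin)
  qed simp
  finally show ?thesis using m0 by simp
qed

lemma bdd_eig:
  assumes "finite S"
  shows "bdd_above (insert 0 (cmod ` eigvals S B))"
proof -
  have "\<forall>y\<in>insert 0 (cmod ` eigvals S B). y \<le> (\<Sum>v\<in>S. \<Sum>w\<in>S. \<bar>B v w\<bar>)"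
    using eig_bound[OF assms] by (auto simp: eigvals_def intro!: sum_nonneg)
  then show ?thesis by (meson bdd_aboveI)
qed

lemma spec_rad_upper:
  assumes "finite S" "\<mu> \<in> eigvals S B"
  shows "cmod \<mu> \<le> spec_rad S B"
  unfolding spec_rad_def by (rule cSup_upper) (use assms bdd_eig in auto)

lemma spec_rad_nonneg:
  assumes "finite S"
  shows "0 \<le> spec_rad S B"
  unfolding spec_rad_def by (rule cSup_upper) (use assms bdd_eig in auto)

lemma spec_rad_least:
  assumes "\<forall>\<mu>\<in>eigvals S B. cmod \<mu> \<le> c" "0 \<le> c"
  shows "spec_rad S B \<le> c"
  unfolding spec_rad_def by (rule cSup_least) (use assms in auto)

lemma real_eig:
  assumes "\<exists>v\<in>S. x v \<noteq> 0" "\<forall>v\<in>S. (\<Sum>w\<in>S. B v w * x w) = s * x v"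
  shows "complex_of_real s \<in> eigvals S B"
  unfolding eigvals_def
proof (intro CollectI exI conjI)
  show "\<exists>v\<in>S. complex_of_real (x v) \<noteq> 0" using assms(1) by auto
  show "\<forall>v\<in>S. (\<Sum>w\<in>S. complex_of_real (B v w) * complex_of_real (x w)) = complex_of_real s * complex_of_real (x v)"
  proof
    fix v assume "v \<in> S"
    have "(\<Sum>w\<in>S. complex_of_real (B v w) * complex_of_real (x w)) = complex_of_real (\<Sum>w\<in>S. B v w * x w)"
      by simp
    also have "\<dots> = complex_of_real (s * x v)" using assms(2) \<open>v \<in> S\<close> by simp
    finally show "(\<Sum>w\<in>S. complex_of_real (B v w) * complex_of_real (x w)) = complex_of_real s * complex_of_real (x v)" by simp
  qed
qed

lemma real_eig_le:
  assumes "finite S" "\<exists>v\<in>S. x v \<noteq> 0" "\<forall>v\<in>S. (\<Sum>w\<in>S. B v w * x w) = s * x v"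
  shows "\<bar>s\<bar> \<le> spec_rad S B"
  using spec_rad_upper[OF assms(1) real_eig[OF assms(2,3)]] by simp

lemma collatz:
  fixes B :: "'a \<Rightarrow> 'a \<Rightarrow> real"
  assumes fin: "finite S" and nn: "\<forall>v\<in>S. \<forall>w\<in>S. 0 \<le> B v w" and xp: "\<forall>v\<in>S. 0 < x v"
    and le: "\<forall>v\<in>S. (\<Sum>w\<in>S. B v w * x w) \<le> c * x v" and mu: "\<mu> \<in> eigvals S B"
  shows "cmod \<mu> \<le> c"
proof -
  obtain z where nz: "\<exists>v\<in>S. z v \<noteq> 0"
    and eq: "\<forall>v\<in>S. (\<Sum>w\<in>S. complex_of_real (B v w) * z w) = \<mu> * z v"
    using mu unfolding eigvals_def by auto
  have ne: "S \<noteq> {}" using nz by auto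
  obtain v0 where v0: "v0 \<in> S" "\<forall>w\<in>S. cmod (z w) / x w \<le> cmod (z v0) / x v0"
    using max_attained[OF fin ne, of "\<lambda>w. cmod (z w) / x w"] by auto
  define t where "t = cmod (z v0) / x v0"
  have xv0: "0 < x v0" using xp v0 by simp
  have zt: "\<forall>w\<in>S. cmod (z w) \<le> t * x w"
    using v0 xp xv0 by (auto simp: t_def pos_divide_le_eq mult.commute)
  obtain v1 where v1: "v1 \<in> S" "z v1 \<noteq> 0" using nz by auto
  have "0 < cmod (z v1) / x v1" using v1 xp by auto
  then have tpos: "t > 0" using v0 v1 unfolding t_def by (meson less_le_trans)
  have zv0: "cmod (z v0) = t * x v0" using xv0 by (simp add: t_def)
  have "cmod \<mu> * (t * x v0) = cmod (\<Sum>w\<in>S. complex_of_real (B v0 w) * z w)"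
    using eq v0 zv0 by (simp add: norm_mult)
  also have "\<dots> \<le> (\<Sum>w\<in>S. B v0 w * cmod (z w))"
    by (rule order_trans[OF norm_sum]) (use nn v0 in \<open>simp add: norm_mult\<close>)
  also have "\<dots> \<le> (\<Sum>w\<in>S. B v0 w * (t * x w))"
    by (rule sum_mono) (use nn v0 zt in \<open>simp add: mult_left_mono\<close>)
  also have "\<dots> = t * (\<Sum>w\<in>S. B v0 w * x w)" by (simp add: sum_distrib_left algebra_simps)
  also have "\<dots> \<le> t * (c * x v0)" using le v0 tpos by (simp add: mult_left_mono)
  finally have "cmod \<mu> * (t * x v0) \<le> c * (t * x v0)" by (simp add: algebra_simps)
  moreover have "t * x v0 > 0" using tpos xp v0 by simp
  ultimately show ?thesis using mult_le_cancel_right_pos by blast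
qed

lemma collatz_rad:
  fixes B :: "'a \<Rightarrow> 'a \<Rightarrow> real"
  assumes fin: "finite S" and ne: "S \<noteq> {}" and nn: "\<forall>v\<in>S. \<forall>w\<in>S. 0 \<le> B v w" and xp: "\<forall>v\<in>S. 0 < x v"
    and le: "\<forall>v\<in>S. (\<Sum>w\<in>S. B v w * x w) \<le> c * x v"
  shows "spec_rad S B \<le> c"
proof (rule spec_rad_least)
  show "\<forall>\<mu>\<in>eigvals S B. cmod \<mu> \<le> c" using collatz[OF fin nn xp le] by auto
  obtain v where v: "v \<in> S" using ne by auto
  have "0 \<le> (\<Sum>w\<in>S. B v w * x w)" using nn xp v by (auto intro!: sum_nonneg simp: less_imp_le)
  then have "0 \<le> c * x v" using le v by (meson order_trans)
  moreover have "0 < x v" using xp v by simp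
  ultimately show "0 \<le> c" by (simp add: zero_le_mult_iff)
qed

lemma collatz_eq:
  fixes B :: "'a \<Rightarrow> 'a \<Rightarrow> real"
  assumes fin: "finite S" and ne: "S \<noteq> {}" and nn: "\<forall>v\<in>S. \<forall>w\<in>S. 0 \<le> B v w" and xp: "\<forall>v\<in>S. 0 < x v"
    and eq: "\<forall>v\<in>S. (\<Sum>w\<in>S. B v w * x w) = c * x v"
  shows "spec_rad S B = c"
proof (rule antisym)
  show "spec_rad S B \<le> c" using collatz_rad[OF fin ne nn xp] eq by auto
  have "\<exists>v\<in>S. x v \<noteq> 0" using ne xp by force
  then have "\<bar>c\<bar> \<le> spec_rad S B" using real_eig_le[OF fin _ eq] by auto
  then show "c \<le> spec_rad S B" by simp
qed

lemma collatz_strict: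
  fixes B :: "'a \<Rightarrow> 'a \<Rightarrow> real"
  assumes fin: "finite S" and ne: "S \<noteq> {}" and nn: "\<forall>v\<in>S. \<forall>w\<in>S. 0 \<le> B v w" and xp: "\<forall>v\<in>S. 0 < x v"
    and lt: "\<forall>v\<in>S. (\<Sum>w\<in>S. B v w * x w) < c * x v"
  shows "spec_rad S B < c"
proof -
  obtain v0 where v0: "v0 \<in> S" "\<forall>w\<in>S. (\<Sum>u\<in>S. B w u * x u) / x w \<le> (\<Sum>u\<in>S. B v0 u * x u) / x v0"
    using max_attained[OF fin ne, of "\<lambda>w. (\<Sum>u\<in>S. B w u * x u) / x w"] by auto
  define c' where "c' = (\<Sum>u\<in>S. B v0 u * x u) / x v0"
  have "\<forall>v\<in>S. (\<Sum>w\<in>S. B v w * x w) \<le> c' * x v"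
    using v0 xp by (auto simp: c'_def pos_divide_le_eq)
  then have "spec_rad S B \<le> c'" by (rule collatz_rad[OF fin ne nn xp])
  moreover have "c' < c" using lt v0 xp by (auto simp: c'_def pos_divide_less_eq)
  ultimately show ?thesis by simp
qed

lemma eig_unique:
  fixes B :: "'a \<Rightarrow> 'a \<Rightarrow> real"
  assumes fin: "finite S" and pos: "\<forall>v\<in>S. \<forall>w\<in>S. 0 < B v w" and xp: "\<forall>v\<in>S. 0 < x v"
    and ex: "\<forall>v\<in>S. (\<Sum>w\<in>S. B v w * x w) = \<rho> * x v"
    and ez: "\<forall>v\<in>S. (\<Sum>w\<in>S. B v w * z w) = \<rho> * z v"
  shows "\<exists>c. \<forall>v\<in>S. z v = c * x v"
proof (cases "S = {}")
  case True then show ?thesis by auto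
next
  case ne: False
  obtain v0 where v0: "v0 \<in> S" "\<forall>w\<in>S. z v0 / x v0 \<le> z w / x w"
    using min_attained[OF fin ne, of "\<lambda>w. z w / x w"] by auto
  define c where "c = z v0 / x v0"
  define y where "y = (\<lambda>w. z w - c * x w)"
  have xv0: "0 < x v0" using xp v0 by simp
  have yn: "\<forall>w\<in>S. 0 \<le> y w" using v0 xp xv0 by (auto simp: y_def c_def pos_le_divide_eq mult.commute)
  have y0: "y v0 = 0" using xv0 by (simp add: y_def c_def)
  have "(\<Sum>w\<in>S. B v0 w * y w) = (\<Sum>w\<in>S. B v0 w * z w) - c * (\<Sum>w\<in>S. B v0 w * x w)"
    by (simp add: y_def right_diff_distrib sum_subtractf sum_distrib_left mult.left_commute)
  then have ey: "(\<Sum>w\<in>S. B v0 w * y w) = \<rho> * y v0"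
    using ex ez v0 by (simp add: y_def algebra_simps)
  then have s0: "(\<Sum>w\<in>S. B v0 w * y w) = 0" using y0 by simp
  have "\<forall>w\<in>S. B v0 w * y w = 0"
    using sum_nonneg_eq_0_iff[OF fin, of "\<lambda>w. B v0 w * y w"] s0 pos yn v0 by (auto simp: less_imp_le)
  then have "\<forall>w\<in>S. y w = 0" using pos v0 by (metis mult_eq_0_iff not_less_iff_gr_or_eq)
  then show ?thesis by (auto simp: y_def)
qed

lemma pos_eig:
  fixes B :: "'a \<Rightarrow> 'a \<Rightarrow> real"
  assumes fin: "finite S" and pos: "\<forall>v\<in>S. \<forall>w\<in>S. 0 < B v w" and xn: "\<forall>v\<in>S. 0 \<le> x v"
    and nz: "\<exists>v\<in>S. x v \<noteq> 0"
    and ex: "\<forall>v\<in>S. (\<Sum>w\<in>S. B v w * x w) = \<rho> * x v"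
  shows "0 < \<rho> \<and> (\<forall>v\<in>S. 0 < x v)"
proof -
  obtain c where c: "c \<in> S" "x c \<noteq> 0" using nz by auto
  have xc: "0 < x c" using c xn by (simp add: order_le_neq_trans)
  have P: "\<forall>v\<in>S. 0 < \<rho> * x v"
  proof
    fix v assume v: "v \<in> S"
    have "0 < (\<Sum>w\<in>S. B v w * x w)"
      by (rule sum_pos2[OF fin c(1)]) (use pos xn v xc c in \<open>auto intro: mult_nonneg_nonneg less_imp_le\<close>)
    then show "0 < \<rho> * x v" using ex v by simp
  qed
  have "0 < \<rho> * x c" using P c by simp
  then have "0 < \<rho>" using xc by (simp add: zero_less_mult_iff)
  then show ?thesis using P xn by (auto simp: zero_less_mult_iff)
qed

lemma bolzano_fin:
  fixes f :: "nat \<Rightarrow> 'a \<Rightarrow> real"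
  assumes "finite S"
  shows "(\<forall>n. \<forall>v\<in>S. \<bar>f n v\<bar> \<le> b) \<Longrightarrow> \<exists>g. strict_mono g \<and> (\<forall>v\<in>S. convergent (\<lambda>n. f (g n) v))"
  using assms
proof (induction S rule: finite_induct)
  case empty
  show ?case using strict_mono_id by blast
next
  case (insert a S)
  have bS: "\<forall>n. \<forall>v\<in>S. \<bar>f n v\<bar> \<le> b" using insert.prems by simp
  obtain g where g: "strict_mono g" "\<forall>v\<in>S. convergent (\<lambda>n. f (g n) v)" using insert.IH[OF bS] by blast
  obtain h where h: "strict_mono h" "monoseq (\<lambda>n. f (g (h n)) a)"
    using seq_monosub[of "\<lambda>n. f (g n) a"] by blast
  have ba: "\<And>n. norm (f (g (h n)) a) \<le> b" using insert.prems by simp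
  have "Bseq (\<lambda>n. f (g (h n)) a)" by (rule BseqI'[OF ba])
  then have ca: "convergent (\<lambda>n. f (g (h n)) a)" using h(2) by (rule Bseq_monoseq_convergent)
  have cS: "\<forall>v\<in>S. convergent (\<lambda>n. f (g (h n)) v)"
  proof
    fix v assume "v \<in> S"
    then have "convergent ((\<lambda>n. f (g n) v) \<circ> h)" using g(2) h(1) convergent_subseq_convergent by blast
    then show "convergent (\<lambda>n. f (g (h n)) v)" by (simp add: o_def)
  qed
  have sm: "strict_mono (g \<circ> h)" using g(1) h(1) by (rule strict_mono_o)
  show ?case
  proof (intro exI conjI)
    show "strict_mono (g \<circ> h)" by (rule sm)
    show "\<forall>v\<in>insert a S. convergent (\<lambda>n. f ((g \<circ> h) n) v)" using ca cS by simp
  qed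
qed

lemma pf_pos:
  fixes P :: "'a \<Rightarrow> 'a \<Rightarrow> real"
  assumes fin: "finite S" and ne: "S \<noteq> {}" and pos: "\<forall>v\<in>S. \<forall>w\<in>S. 0 < P v w"
    and un: "\<forall>v\<in>S. 0 \<le> u v" and us: "(\<Sum>v\<in>S. u v) = 1"
    and ut: "\<forall>v\<in>S. t * u v \<le> (\<Sum>w\<in>S. P v w * u w)"
  shows "\<exists>x s. (\<forall>v\<in>S. 0 \<le> x v) \<and> (\<Sum>v\<in>S. x v) = 1 \<and> t \<le> s \<and>
               (\<forall>v\<in>S. (\<Sum>w\<in>S. P v w * x w) = s * x v)"
proof -
  define T where "T = {r. \<exists>x. (\<forall>v\<in>S. 0 \<le> x v) \<and> (\<Sum>v\<in>S. x v) = 1 \<and>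
                          (\<forall>v\<in>S. r * x v \<le> (\<Sum>w\<in>S. P v w * x w))}"
  define N where "N = (\<Sum>v\<in>S. \<Sum>w\<in>S. P v w)"
  have tT: "t \<in> T" unfolding T_def using un us ut by auto
  have bound: "r \<le> N" if "r \<in> T" for r
  proof -
    obtain x where x: "\<forall>v\<in>S. 0 \<le> x v" "(\<Sum>v\<in>S. x v) = 1" "\<forall>v\<in>S. r * x v \<le> (\<Sum>w\<in>S. P v w * x w)"
      using \<open>r \<in> T\<close> unfolding T_def by auto
    have x1: "\<forall>w\<in>S. x w \<le> 1"
    proof
      fix w assume w: "w \<in> S"
      have "x w \<le> (\<Sum>w\<in>S. x w)" by (rule member_le_sum[OF w]) (use x(1) fin in auto)
      then show "x w \<le> 1" using x(2) by simp
    qed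
    have "r = (\<Sum>v\<in>S. r * x v)" using x(2) by (simp add: sum_distrib_left[symmetric])
    also have "\<dots> \<le> (\<Sum>v\<in>S. \<Sum>w\<in>S. P v w * x w)" by (rule sum_mono) (use x in auto)
    also have "\<dots> \<le> N" unfolding N_def
      by (intro sum_mono) (use pos x1 in \<open>auto intro: mult_left_le less_imp_le\<close>)
    finally show ?thesis .
  qed
  have bddT: "bdd_above T" using bound by (meson bdd_aboveI)
  define R where "R = Sup T"
  have tR: "t \<le> R" unfolding R_def using tT bddT by (rule cSup_upper)
  have rR: "r \<le> R" if "r \<in> T" for r unfolding R_def using that bddT by (rule cSup_upper)
  have "\<forall>n. \<exists>r X. R - 1 / (real n + 1) < r \<and> (\<forall>v\<in>S. 0 \<le> X v) \<and> (\<Sum>v\<in>S. X v) = 1 \<and>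
                 (\<forall>v\<in>S. r * X v \<le> (\<Sum>w\<in>S. P v w * X w))"
  proof
    fix n
    have "R - 1 / (real n + 1) < Sup T" unfolding R_def by simp
    then obtain r where "r \<in> T" "R - 1 / (real n + 1) < r" using less_cSupE tT by blast
    then show "\<exists>r X. R - 1 / (real n + 1) < r \<and> (\<forall>v\<in>S. 0 \<le> X v) \<and> (\<Sum>v\<in>S. X v) = 1 \<and>
                 (\<forall>v\<in>S. r * X v \<le> (\<Sum>w\<in>S. P v w * X w))" unfolding T_def by auto
  qed
  then obtain rr X where rX: "\<And>n. R - 1 / (real n + 1) < rr n" "\<And>n. \<forall>v\<in>S. 0 \<le> X n v"
     "\<And>n. (\<Sum>v\<in>S. X n v) = 1" "\<And>n. \<forall>v\<in>S. rr n * X n v \<le> (\<Sum>w\<in>S. P v w * X n w)"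
    by metis
  have rrT: "rr n \<in> T" for n unfolding T_def using rX by blast
  have Xb: "\<forall>n. \<forall>v\<in>S. \<bar>X n v\<bar> \<le> 1"
  proof (intro allI ballI)
    fix n v assume v: "v \<in> S"
    have "X n v \<le> (\<Sum>w\<in>S. X n w)" by (rule member_le_sum[OF v]) (use rX(2) fin in auto)
    then show "\<bar>X n v\<bar> \<le> 1" using rX(2,3) v by simp
  qed
  obtain g where g: "strict_mono g" "\<forall>v\<in>S. convergent (\<lambda>n. X (g n) v)"
    using bolzano_fin[OF fin Xb] by blast
  define x where "x = (\<lambda>v. lim (\<lambda>n. X (g n) v))"
  have xl: "\<forall>v\<in>S. (\<lambda>n. X (g n) v) \<longlonglongrightarrow> x v"
    using g(2) by (auto simp: x_def convergent_LIMSEQ_iff)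
  have rl: "(\<lambda>n. rr (g n)) \<longlonglongrightarrow> R"
  proof (rule tendsto_sandwich[where f="\<lambda>n. R - 1 / (real (g n) + 1)" and h="\<lambda>n. R"])
    show "\<forall>\<^sub>F n in sequentially. R - 1 / (real (g n) + 1) \<le> rr (g n)"
      by (intro always_eventually allI) (simp add: less_imp_le rX(1))
    show "\<forall>\<^sub>F n in sequentially. rr (g n) \<le> R" by (intro always_eventually allI rR rrT)
    show "(\<lambda>n. R) \<longlonglongrightarrow> R" by simp
    have "(\<lambda>n. 1 / (real n + 1)) \<longlonglongrightarrow> 0" using LIMSEQ_inverse_real_of_nat by (simp add: inverse_eq_divide add.commute)
    then have "((\<lambda>n. 1 / (real n + 1)) \<circ> g) \<longlonglongrightarrow> 0" using g(1) LIMSEQ_subseq_LIMSEQ by blast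
    then have "(\<lambda>n. R - 1 / (real (g n) + 1)) \<longlonglongrightarrow> R - 0" by (intro tendsto_diff) (auto simp: o_def)
    then show "(\<lambda>n. R - 1 / (real (g n) + 1)) \<longlonglongrightarrow> R" by simp
  qed
  have xn: "\<forall>v\<in>S. 0 \<le> x v"
  proof
    fix v assume v: "v \<in> S"
    show "0 \<le> x v" by (rule LIMSEQ_le_const[OF xl[rule_format, OF v]]) (use rX(2) v in auto)
  qed
  have xs: "(\<Sum>v\<in>S. x v) = 1"
  proof -
    have "(\<lambda>n. \<Sum>v\<in>S. X (g n) v) \<longlonglongrightarrow> (\<Sum>v\<in>S. x v)" by (rule tendsto_sum) (use xl in auto)
    moreover have "(\<lambda>n. \<Sum>v\<in>S. X (g n) v) \<longlonglongrightarrow> 1" using rX(3) by simp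
    ultimately show ?thesis using LIMSEQ_unique by blast
  qed
  have Px: "\<forall>v\<in>S. (\<Sum>w\<in>S. P v w * x w) \<ge> R * x v"
  proof
    fix v assume v: "v \<in> S"
    have "(\<lambda>n. rr (g n) * X (g n) v) \<longlonglongrightarrow> R * x v" using rl xl v by (auto intro: tendsto_mult)
    moreover have "(\<lambda>n. \<Sum>w\<in>S. P v w * X (g n) w) \<longlonglongrightarrow> (\<Sum>w\<in>S. P v w * x w)"
      by (intro tendsto_sum tendsto_mult tendsto_const) (use xl in auto)
    ultimately show "(\<Sum>w\<in>S. P v w * x w) \<ge> R * x v"
      using rX(4) v by (intro LIMSEQ_le) auto
  qed
  have Peq: "\<forall>v\<in>S. (\<Sum>w\<in>S. P v w * x w) = R * x v"
  proof (rule ccontr)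
    assume "\<not> ?thesis"
    then obtain v0 where v0: "v0 \<in> S" "R * x v0 < (\<Sum>w\<in>S. P v0 w * x w)" using Px by force
    define z where "z = (\<lambda>v. \<Sum>w\<in>S. P v w * x w)"
    obtain w0 where w0: "w0 \<in> S" "x w0 \<noteq> 0" using xs by (metis sum.neutral zero_neq_one)
    have xw0: "0 < x w0" using w0 xn by (simp add: order_le_neq_trans)
    have zpos: "\<forall>v\<in>S. 0 < z v"
    proof
      fix v assume v: "v \<in> S"
      show "0 < z v" unfolding z_def
        by (rule sum_pos2[OF fin w0(1)]) (use pos xn v xw0 w0 in \<open>auto intro: mult_nonneg_nonneg less_imp_le\<close>)
    qed
    have strict: "\<forall>v\<in>S. R * z v < (\<Sum>w\<in>S. P v w * z w)"
    proof
      fix v assume v: "v \<in> S"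
      have "(\<Sum>w\<in>S. P v w * z w) - R * z v = (\<Sum>w\<in>S. P v w * (z w - R * x w))"
        by (simp add: z_def sum_distrib_left right_diff_distrib sum_subtractf algebra_simps)
      also have "\<dots> > 0"
      proof (rule sum_pos2[OF fin v0(1)])
        show "0 < P v v0 * (z v0 - R * x v0)" using pos v v0 by (simp add: z_def)
        fix i assume i: "i \<in> S"
        have "0 \<le> z i - R * x i" using Px i by (simp add: z_def)
        then show "0 \<le> P v i * (z i - R * x i)" using pos v i by (simp add: less_imp_le)
      qed
      finally show "R * z v < (\<Sum>w\<in>S. P v w * z w)" by simp
    qed
    obtain v1 where v1: "v1 \<in> S" "\<forall>w\<in>S. ((\<Sum>u\<in>S. P v1 u * z u) - R * z v1) / z v1
                                     \<le> ((\<Sum>u\<in>S. P w u * z u) - R * z w) / z w"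
      using min_attained[OF fin ne, of "\<lambda>w. ((\<Sum>u\<in>S. P w u * z u) - R * z w) / z w"] by auto
    define e where "e = ((\<Sum>u\<in>S. P v1 u * z u) - R * z v1) / z v1"
    have epos: "e > 0" unfolding e_def using strict zpos v1 by auto
    have ez: "\<forall>v\<in>S. (R + e) * z v \<le> (\<Sum>w\<in>S. P v w * z w)"
    proof
      fix v assume v: "v \<in> S"
      have "e \<le> ((\<Sum>u\<in>S. P v u * z u) - R * z v) / z v" using v1 v unfolding e_def by auto
      then have "e * z v \<le> (\<Sum>u\<in>S. P v u * z u) - R * z v" using zpos v by (simp add: pos_le_divide_eq)
      then show "(R + e) * z v \<le> (\<Sum>w\<in>S. P v w * z w)" by (simp add: algebra_simps)
    qed
    define Z where "Z = (\<Sum>v\<in>S. z v)"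
    have Zpos: "Z > 0" unfolding Z_def using zpos ne fin by (simp add: sum_pos)
    have "R + e \<in> T" unfolding T_def
    proof (intro CollectI exI[of _ "\<lambda>v. z v / Z"] conjI)
      show "\<forall>v\<in>S. 0 \<le> z v / Z" using zpos Zpos by (auto intro: less_imp_le)
      show "(\<Sum>v\<in>S. z v / Z) = 1" using Zpos by (simp add: Z_def sum_divide_distrib[symmetric])
      show "\<forall>v\<in>S. (R + e) * (z v / Z) \<le> (\<Sum>w\<in>S. P v w * (z w / Z))"
      proof
        fix v assume v: "v \<in> S"
        have "(R + e) * (z v / Z) = ((R + e) * z v) / Z" by simp
        also have "\<dots> \<le> (\<Sum>w\<in>S. P v w * z w) / Z" using ez v Zpos by (simp add: divide_right_mono)
        also have "\<dots> = (\<Sum>w\<in>S. P v w * (z w / Z))" by (simp add: sum_divide_distrib)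
        finally show "(R + e) * (z v / Z) \<le> (\<Sum>w\<in>S. P v w * (z w / Z))" .
      qed
    qed
    then have "R + e \<le> R" by (rule rR)
    then show False using epos by simp
  qed
  show ?thesis using xn xs tR Peq by blast
qed

lemma pf_nonneg:
  fixes M :: "'a \<Rightarrow> 'a \<Rightarrow> real"
  assumes fin: "finite S" and ne: "S \<noteq> {}" and nn: "\<forall>v\<in>S. \<forall>w\<in>S. 0 \<le> M v w"
    and un: "\<forall>v\<in>S. 0 \<le> u v" and us: "(\<Sum>v\<in>S. u v) = 1"
    and ut: "\<forall>v\<in>S. t * u v \<le> (\<Sum>w\<in>S. M v w * u w)"
  shows "\<exists>x s. (\<forall>v\<in>S. 0 \<le> x v) \<and> (\<Sum>v\<in>S. x v) = 1 \<and> t \<le> s \<and>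
               (\<forall>v\<in>S. (\<Sum>w\<in>S. M v w * x w) = s * x v)"
proof -
  define Pn where "Pn = (\<lambda>n v w. M v w + 1 / (real n + 1))"
  have "\<forall>n. \<exists>X s. (\<forall>v\<in>S. 0 \<le> X v) \<and> (\<Sum>v\<in>S. X v) = 1 \<and> t \<le> s \<and>
               (\<forall>v\<in>S. (\<Sum>w\<in>S. Pn n v w * X w) = s * X v)"
  proof
    fix n
    show "\<exists>X s. (\<forall>v\<in>S. 0 \<le> X v) \<and> (\<Sum>v\<in>S. X v) = 1 \<and> t \<le> s \<and>
               (\<forall>v\<in>S. (\<Sum>w\<in>S. Pn n v w * X w) = s * X v)"
    proof (rule pf_pos[OF fin ne _ un us])
      show "\<forall>v\<in>S. \<forall>w\<in>S. 0 < Pn n v w" using nn by (auto simp: Pn_def add_nonneg_pos)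
      show "\<forall>v\<in>S. t * u v \<le> (\<Sum>w\<in>S. Pn n v w * u w)"
      proof
        fix v assume v: "v \<in> S"
        have "(\<Sum>w\<in>S. Pn n v w * u w) = (\<Sum>w\<in>S. M v w * u w) + (1 / (real n + 1)) * (\<Sum>w\<in>S. u w)"
          by (simp add: Pn_def distrib_right sum.distrib sum_distrib_left)
        also have "\<dots> \<ge> (\<Sum>w\<in>S. M v w * u w)" using us by simp
        finally have "(\<Sum>w\<in>S. M v w * u w) \<le> (\<Sum>w\<in>S. Pn n v w * u w)" .
        moreover have "t * u v \<le> (\<Sum>w\<in>S. M v w * u w)" using ut v by blast
        ultimately show "t * u v \<le> (\<Sum>w\<in>S. Pn n v w * u w)" by linarith
      qed
    qed
  qed
  then obtain X ss where XS: "\<And>n. \<forall>v\<in>S. 0 \<le> X n v" "\<And>n. (\<Sum>v\<in>S. X n v) = 1" "\<And>n. t \<le> ss n"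
    "\<And>n. \<forall>v\<in>S. (\<Sum>w\<in>S. Pn n v w * X n w) = ss n * X n v"
    by metis
  have X1: "\<forall>n. \<forall>v\<in>S. \<bar>X n v\<bar> \<le> 1"
  proof (intro allI ballI)
    fix n v assume v: "v \<in> S"
    have "X n v \<le> (\<Sum>w\<in>S. X n w)" by (rule member_le_sum[OF v]) (use XS(1) fin in auto)
    then show "\<bar>X n v\<bar> \<le> 1" using XS(1,2) v by simp
  qed
  define N where "N = (\<Sum>v\<in>S. \<Sum>w\<in>S. M v w + 1)"
  have ssN: "ss n \<le> N" for n
  proof -
    have "ss n = (\<Sum>v\<in>S. ss n * X n v)" using XS(2)[of n] by (simp add: sum_distrib_left[symmetric])
    also have "\<dots> = (\<Sum>v\<in>S. \<Sum>w\<in>S. Pn n v w * X n w)" using XS(4)[of n] by simp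
    also have "\<dots> \<le> N" unfolding N_def
    proof (intro sum_mono)
      fix v w assume v: "v \<in> S" and w: "w \<in> S"
      have "Pn n v w \<le> M v w + 1" by (simp add: Pn_def)
      moreover have "0 \<le> Pn n v w" using nn v w by (simp add: Pn_def)
      moreover have "X n w \<le> 1" "0 \<le> X n w" using X1 XS(1) w by auto
      ultimately show "Pn n v w * X n w \<le> M v w + 1"
        by (meson mult_le_one mult_left_le order_trans le_less_linear less_imp_le)
    qed
    finally show ?thesis .
  qed
  obtain h where h: "strict_mono h" "monoseq (\<lambda>n. ss (h n))" using seq_monosub[of ss] by blast
  have "norm (ss (h n)) \<le> \<bar>t\<bar> + \<bar>N\<bar>" for n
  proof -
    have "t \<le> ss (h n)" "ss (h n) \<le> N" using ssN XS(3) by auto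
    then show ?thesis by (simp add: abs_le_iff, linarith)
  qed
  then have "Bseq (\<lambda>n. ss (h n))" by (rule BseqI')
  then have cs: "convergent (\<lambda>n. ss (h n))" using h(2) by (rule Bseq_monoseq_convergent)
  have X1h: "\<forall>n. \<forall>v\<in>S. \<bar>X (h n) v\<bar> \<le> 1" using X1 by simp
  obtain g where g: "strict_mono g" "\<forall>v\<in>S. convergent (\<lambda>n. X (h (g n)) v)"
    using bolzano_fin[OF fin X1h] by blast
  define \<phi> where "\<phi> = h \<circ> g"
  have phi: "strict_mono \<phi>" unfolding \<phi>_def using h(1) g(1) by (rule strict_mono_o)
  define s where "s = lim (\<lambda>n. ss (h n))"
  have sl: "(\<lambda>n. ss (\<phi> n)) \<longlonglongrightarrow> s"
  proof -
    have "(\<lambda>n. ss (h n)) \<longlonglongrightarrow> s" using cs by (simp add: s_def convergent_LIMSEQ_iff)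
    then have "((\<lambda>n. ss (h n)) \<circ> g) \<longlonglongrightarrow> s" using g(1) by (rule LIMSEQ_subseq_LIMSEQ)
    then show ?thesis by (simp add: \<phi>_def o_def)
  qed
  define x where "x = (\<lambda>v. lim (\<lambda>n. X (\<phi> n) v))"
  have xl: "\<forall>v\<in>S. (\<lambda>n. X (\<phi> n) v) \<longlonglongrightarrow> x v"
    using g(2) by (auto simp: x_def \<phi>_def convergent_LIMSEQ_iff)
  have el: "(\<lambda>n. 1 / (real (\<phi> n) + 1)) \<longlonglongrightarrow> 0"
  proof -
    have "(\<lambda>n. 1 / (real n + 1)) \<longlonglongrightarrow> 0" using LIMSEQ_inverse_real_of_nat by (simp add: inverse_eq_divide add.commute)
    then have "((\<lambda>n. 1 / (real n + 1)) \<circ> \<phi>) \<longlonglongrightarrow> 0" using phi LIMSEQ_subseq_LIMSEQ by blast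
    then show ?thesis by (simp add: o_def)
  qed
  have xn: "\<forall>v\<in>S. 0 \<le> x v"
  proof
    fix v assume v: "v \<in> S"
    show "0 \<le> x v" by (rule LIMSEQ_le_const[OF xl[rule_format, OF v]]) (use XS(1) v in auto)
  qed
  have xs: "(\<Sum>v\<in>S. x v) = 1"
  proof -
    have "(\<lambda>n. \<Sum>v\<in>S. X (\<phi> n) v) \<longlonglongrightarrow> (\<Sum>v\<in>S. x v)" by (rule tendsto_sum) (use xl in auto)
    moreover have "(\<lambda>n. \<Sum>v\<in>S. X (\<phi> n) v) \<longlonglongrightarrow> 1" using XS(2) by simp
    ultimately show ?thesis using LIMSEQ_unique by blast
  qed
  have ts: "t \<le> s" by (rule LIMSEQ_le_const[OF sl]) (use XS(3) in auto)
  have eq: "\<forall>v\<in>S. (\<Sum>w\<in>S. M v w * x w) = s * x v"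
  proof
    fix v assume v: "v \<in> S"
    have "(\<lambda>n. ss (\<phi> n) * X (\<phi> n) v) \<longlonglongrightarrow> s * x v" using sl xl v by (auto intro: tendsto_mult)
    moreover have "(\<lambda>n. \<Sum>w\<in>S. Pn (\<phi> n) v w * X (\<phi> n) w) \<longlonglongrightarrow> (\<Sum>w\<in>S. (M v w + 0) * x w)"
      unfolding Pn_def by (intro tendsto_sum tendsto_mult tendsto_add tendsto_const el) (use xl in auto)
    ultimately show "(\<Sum>w\<in>S. M v w * x w) = s * x v" using XS(4) v LIMSEQ_unique by fastforce
  qed
  show ?thesis using xn xs ts eq by blast
qed

definition struc :: "'a set \<Rightarrow> 'a set \<Rightarrow> 'a set \<Rightarrow> ('a \<Rightarrow> 'a \<Rightarrow> real) \<Rightarrow> bool" where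
  "struc V C K M \<longleftrightarrow> (\<forall>v\<in>V. \<forall>w\<in>V. 0 \<le> M v w) \<and> (\<forall>v\<in>C. \<forall>w\<in>C. 0 < M v w) \<and>
     (\<forall>v\<in>V-K. \<forall>w\<in>K. M v w = 0) \<and> (\<forall>v\<in>C. \<forall>w\<in>K-C. M v w = 0) \<and> (\<forall>v\<in>K-C. \<exists>c\<in>C. 0 < M v c)"

definition hv :: "'a set \<Rightarrow> 'a set \<Rightarrow> 'a set \<Rightarrow> ('a \<Rightarrow> 'a \<Rightarrow> real) \<Rightarrow> ('a \<Rightarrow> real) \<Rightarrow> bool" where
  "hv V K C M x \<longleftrightarrow> (\<forall>v. v \<notin> V \<longrightarrow> x v = 0) \<and> (\<forall>v. 0 \<le> x v) \<and> (\<Sum>v\<in>V. x v) = 1 \<and>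
     (\<forall>v\<in>V. (\<Sum>w\<in>V. M v w * x w) = spec_rad C M * x v) \<and> (\<forall>v\<in>V. v \<notin> K \<longrightarrow> x v = 0)"

definition harm :: "'a set \<Rightarrow> 'a set \<Rightarrow> ('a \<Rightarrow> 'a \<Rightarrow> real) \<Rightarrow> bool" where
  "harm K C M \<longleftrightarrow> K - C = {} \<or> spec_rad (K - C) M < spec_rad C M"

locale base =
  fixes V C K :: "'a set"
  assumes finV: "finite V" and CK: "C \<subseteq> K" and KV: "K \<subseteq> V" and Cne: "C \<noteq> {}"
begin

lemma finK: "finite K" using finV KV finite_subset by blast
lemma finC: "finite C" using finK CK finite_subset by blast
lemma finD: "finite (K - C)" using finK by simp

lemma sumVK:
  fixes f :: "'a \<Rightarrow> real"
  assumes "\<forall>w\<in>V-K. f w = 0"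
  shows "(\<Sum>w\<in>V. f w) = (\<Sum>w\<in>C. f w) + (\<Sum>w\<in>K-C. f w)"
proof -
  have "(\<Sum>w\<in>V. f w) = (\<Sum>w\<in>K. f w)" by (rule sum.mono_neutral_right[OF finV KV]) (use assms in auto)
  also have "\<dots> = (\<Sum>w\<in>K-C. f w) + (\<Sum>w\<in>C. f w)" by (rule sum.subset_diff[OF CK finK])
  finally show ?thesis by (simp add: add.commute)
qed

lemma rowC:
  fixes M :: "'a \<Rightarrow> 'a \<Rightarrow> real" and x :: "'a \<Rightarrow> real"
  assumes "struc V C K M" "\<forall>w\<in>V-K. x w = 0" "v \<in> C"
  shows "(\<Sum>w\<in>V. M v w * x w) = (\<Sum>w\<in>C. M v w * x w)"
proof -
  have "(\<Sum>w\<in>V. M v w * x w) = (\<Sum>w\<in>C. M v w * x w) + (\<Sum>w\<in>K-C. M v w * x w)"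
    by (rule sumVK) (use assms in auto)
  moreover have "(\<Sum>w\<in>K-C. M v w * x w) = 0" using assms unfolding struc_def by auto
  ultimately show ?thesis by simp
qed

lemma rowD:
  fixes M :: "'a \<Rightarrow> 'a \<Rightarrow> real" and x :: "'a \<Rightarrow> real"
  assumes "\<forall>w\<in>V-K. x w = 0"
  shows "(\<Sum>w\<in>V. M v w * x w) = (\<Sum>w\<in>C. M v w * x w) + (\<Sum>w\<in>K-C. M v w * x w)"
  by (rule sumVK) (use assms in auto)

lemma rowO:
  fixes M :: "'a \<Rightarrow> 'a \<Rightarrow> real" and x :: "'a \<Rightarrow> real"
  assumes "struc V C K M" "\<forall>w\<in>V-K. x w = 0" "v \<in> V - K"
  shows "(\<Sum>w\<in>V. M v w * x w) = 0"
proof -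
  have "(\<Sum>w\<in>V. M v w * x w) = (\<Sum>w\<in>C. M v w * x w) + (\<Sum>w\<in>K-C. M v w * x w)"
    by (rule sumVK) (use assms in auto)
  moreover have "(\<Sum>w\<in>C. M v w * x w) = 0" "(\<Sum>w\<in>K-C. M v w * x w) = 0"
    using assms CK unfolding struc_def by (auto intro!: sum.neutral)
  ultimately show ?thesis by simp
qed

lemma noeigD:
  fixes M :: "'a \<Rightarrow> 'a \<Rightarrow> real" and z :: "'a \<Rightarrow> real"
  assumes h: "harm K C M"
    and e: "\<forall>v\<in>K-C. (\<Sum>w\<in>K-C. M v w * z w) = s * z v" and s: "spec_rad C M \<le> s"
  shows "\<forall>v\<in>K-C. z v = 0"
proof (rule ccontr)
  assume "\<not> ?thesis"
  then have nz: "\<exists>v\<in>K-C. z v \<noteq> 0" by auto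
  then have "K - C \<noteq> {}" by auto
  then have lt: "spec_rad (K - C) M < spec_rad C M" using h unfolding harm_def by auto
  have "\<bar>s\<bar> \<le> spec_rad (K - C) M" by (rule real_eig_le[OF finD nz e])
  then show False using lt s by simp
qed

lemma hv_pos:
  fixes M :: "'a \<Rightarrow> 'a \<Rightarrow> real" and x :: "'a \<Rightarrow> real"
  assumes st: "struc V C K M" and h: "harm K C M" and x: "hv V K C M x"
  shows "0 < spec_rad C M \<and> (\<forall>v\<in>C. 0 < x v)"
proof -
  let ?\<rho> = "spec_rad C M"
  have x0: "\<forall>w\<in>V-K. x w = 0" using x unfolding hv_def by auto
  have ex: "\<forall>v\<in>V. (\<Sum>w\<in>V. M v w * x w) = ?\<rho> * x v" using x unfolding hv_def by auto
  have nzC: "\<exists>c\<in>C. x c \<noteq> 0"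
  proof (rule ccontr)
    assume "\<not> ?thesis"
    then have zC: "\<forall>c\<in>C. x c = 0" by auto
    have "\<forall>v\<in>K-C. (\<Sum>w\<in>K-C. M v w * x w) = ?\<rho> * x v"
    proof
      fix v assume v: "v \<in> K - C"
      have "(\<Sum>w\<in>V. M v w * x w) = (\<Sum>w\<in>C. M v w * x w) + (\<Sum>w\<in>K-C. M v w * x w)"
        by (rule rowD[OF x0])
      then show "(\<Sum>w\<in>K-C. M v w * x w) = ?\<rho> * x v" using ex v KV zC by auto
    qed
    then have zD: "\<forall>v\<in>K-C. x v = 0" using noeigD[OF h] by blast
    have "(\<Sum>v\<in>V. x v) = (\<Sum>w\<in>C. x w) + (\<Sum>w\<in>K-C. x w)" by (rule sumVK) (use x0 in auto)
    also have "\<dots> = 0" using zC zD by simp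
    finally show False using x unfolding hv_def by simp
  qed
  have eC: "\<forall>v\<in>C. (\<Sum>w\<in>C. M v w * x w) = ?\<rho> * x v"
  proof
    fix v assume v: "v \<in> C"
    then have "v \<in> V" using CK KV by auto
    then show "(\<Sum>w\<in>C. M v w * x w) = ?\<rho> * x v" using ex rowC[OF st x0 v] by simp
  qed
  show ?thesis
    by (rule pos_eig[OF finC _ _ nzC eC]) (use st x in \<open>auto simp: struc_def hv_def\<close>)
qed

lemma struc_nn: "struc V C K M \<Longrightarrow> v \<in> V \<Longrightarrow> w \<in> V \<Longrightarrow> 0 \<le> M v w"
  unfolding struc_def by auto

lemma transfer:
  fixes M G :: "'a \<Rightarrow> 'a \<Rightarrow> real" and x :: "'a \<Rightarrow> real"
  assumes stM: "struc V C K M" and stG: "struc V C K G"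
    and comm: "\<forall>v\<in>V. \<forall>w\<in>V. (\<Sum>u\<in>V. M v u * G u w) = (\<Sum>u\<in>V. G v u * M u w)"
    and h: "harm K C M" and x: "hv V K C M x"
  shows "hv V K C G x"
proof -
  let ?\<rho> = "spec_rad C M"
  have x0: "\<forall>w\<in>V-K. x w = 0" using x unfolding hv_def by auto
  have ex: "\<forall>v\<in>V. (\<Sum>w\<in>V. M v w * x w) = ?\<rho> * x v" using x unfolding hv_def by auto
  have xp: "\<forall>v\<in>C. 0 < x v" using hv_pos[OF stM h x] by auto
  have CV: "\<And>v. v \<in> C \<Longrightarrow> v \<in> V" using CK KV by auto
  have DV: "\<And>v. v \<in> K - C \<Longrightarrow> v \<in> V" using KV by auto
  define y where "y = (\<lambda>v. \<Sum>w\<in>V. G v w * x w)"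
  have y0: "\<forall>w\<in>V-K. y w = 0" using rowO[OF stG x0] by (auto simp: y_def)
  have eyV: "\<forall>v\<in>V. (\<Sum>w\<in>V. M v w * y w) = ?\<rho> * y v"
  proof
    fix v assume v: "v \<in> V"
    have "(\<Sum>w\<in>V. M v w * y w) = (\<Sum>w\<in>V. \<Sum>u\<in>V. M v w * G w u * x u)"
      by (simp add: y_def sum_distrib_left mult.assoc)
    also have "\<dots> = (\<Sum>u\<in>V. (\<Sum>w\<in>V. M v w * G w u) * x u)"
      by (subst sum.swap) (simp add: sum_distrib_right)
    also have "\<dots> = (\<Sum>u\<in>V. (\<Sum>w\<in>V. G v w * M w u) * x u)"
      using comm v by simp
    also have "\<dots> = (\<Sum>w\<in>V. G v w * (\<Sum>u\<in>V. M w u * x u))"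
      by (simp add: sum_distrib_left sum_distrib_right mult.assoc) (subst sum.swap, simp)
    also have "\<dots> = (\<Sum>w\<in>V. G v w * (?\<rho> * x w))" using ex by simp
    also have "\<dots> = ?\<rho> * y v" by (simp add: y_def sum_distrib_left algebra_simps)
    finally show "(\<Sum>w\<in>V. M v w * y w) = ?\<rho> * y v" .
  qed
  have eyC: "\<forall>v\<in>C. (\<Sum>w\<in>C. M v w * y w) = ?\<rho> * y v"
    using eyV rowC[OF stM y0] CV by simp
  have exC: "\<forall>v\<in>C. (\<Sum>w\<in>C. M v w * x w) = ?\<rho> * x v"
    using ex rowC[OF stM x0] CV by simp
  have posM: "\<forall>v\<in>C. \<forall>w\<in>C. 0 < M v w" using stM unfolding struc_def by auto
  obtain c where yc: "\<forall>v\<in>C. y v = c * x v" using eig_unique[OF finC posM xp exC eyC] by blast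
  define z where "z = (\<lambda>v. y v - c * x v)"
  have z0: "\<forall>w\<in>V-K. z w = 0" using x0 y0 by (simp add: z_def)
  have zC: "\<forall>v\<in>C. z v = 0" using yc by (simp add: z_def)
  have ezV: "\<forall>v\<in>V. (\<Sum>w\<in>V. M v w * z w) = ?\<rho> * z v"
  proof
    fix v assume v: "v \<in> V"
    have "(\<Sum>w\<in>V. M v w * z w) = (\<Sum>w\<in>V. M v w * y w) - c * (\<Sum>w\<in>V. M v w * x w)"
      by (simp add: z_def right_diff_distrib sum_subtractf sum_distrib_left mult.left_commute)
    then show "(\<Sum>w\<in>V. M v w * z w) = ?\<rho> * z v" using eyV ex v by (simp add: z_def algebra_simps)
  qed
  have ezD: "\<forall>v\<in>K-C. (\<Sum>w\<in>K-C. M v w * z w) = ?\<rho> * z v"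
  proof
    fix v assume v: "v \<in> K - C"
    have "(\<Sum>w\<in>V. M v w * z w) = (\<Sum>w\<in>C. M v w * z w) + (\<Sum>w\<in>K-C. M v w * z w)"
      by (rule rowD[OF z0])
    then show "(\<Sum>w\<in>K-C. M v w * z w) = ?\<rho> * z v" using ezV DV[OF v] zC by simp
  qed
  have zD: "\<forall>v\<in>K-C. z v = 0" using noeigD[OF h ezD] by simp
  have zV: "\<forall>v\<in>V. z v = 0" using zC zD z0 by blast
  have yV: "\<forall>v\<in>V. y v = c * x v" using zV by (simp add: z_def)
  have eC: "\<forall>v\<in>C. (\<Sum>w\<in>C. G v w * x w) = c * x v"
    using yV rowC[OF stG x0] CV by (simp add: y_def)
  have nnG: "\<forall>v\<in>C. \<forall>w\<in>C. 0 \<le> G v w" using stG CV unfolding struc_def by auto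
  have sG: "spec_rad C G = c" by (rule collatz_eq[OF finC Cne nnG xp eC])
  show ?thesis using x yV sG unfolding hv_def y_def by auto
qed

lemma sum_ifK:
  fixes f g :: "'a \<Rightarrow> real"
  shows "(\<Sum>w\<in>V. f w * (if w \<in> K then g w else 0)) = (\<Sum>w\<in>K. f w * g w)"
proof -
  have "(\<Sum>w\<in>V. f w * (if w \<in> K then g w else 0)) = (\<Sum>w\<in>K. f w * (if w \<in> K then g w else 0))"
    by (rule sum.mono_neutral_right[OF finV KV]) auto
  also have "\<dots> = (\<Sum>w\<in>K. f w * g w)" by (rule sum.cong) auto
  finally show ?thesis .
qed

lemma existence:
  fixes M :: "'a \<Rightarrow> 'a \<Rightarrow> real"
  assumes stM: "struc V C K M" and h: "harm K C M"
  shows "\<exists>x. hv V K C M x"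
proof -
  let ?\<rho> = "spec_rad C M"
  have CV: "\<And>v. v \<in> C \<Longrightarrow> v \<in> V" using CK KV by auto
  have posM: "\<forall>v\<in>C. \<forall>w\<in>C. 0 < M v w" using stM unfolding struc_def by auto
  have nnC: "\<forall>v\<in>C. \<forall>w\<in>C. 0 \<le> M v w" using posM by (auto intro: less_imp_le)
  have nnK: "\<forall>v\<in>K. \<forall>w\<in>K. 0 \<le> M v w" using struc_nn[OF stM] KV by blast
  have cC: "card C > 0" using finC Cne by (simp add: card_gt_0_iff)
  obtain x0 s0 where x0: "\<forall>v\<in>C. 0 \<le> x0 v" "(\<Sum>v\<in>C. x0 v) = 1" "0 \<le> s0"
     "\<forall>v\<in>C. (\<Sum>w\<in>C. M v w * x0 w) = s0 * x0 v"
  proof -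
    have "\<exists>x s. (\<forall>v\<in>C. 0 \<le> x v) \<and> (\<Sum>v\<in>C. x v) = 1 \<and> 0 \<le> s \<and>
               (\<forall>v\<in>C. (\<Sum>w\<in>C. M v w * x w) = s * x v)"
    proof (rule pf_pos[OF finC Cne posM, of "\<lambda>v. 1 / real (card C)"])
      show "\<forall>v\<in>C. 0 \<le> 1 / real (card C)" by simp
      show "(\<Sum>v\<in>C. 1 / real (card C)) = 1" using cC by simp
      show "\<forall>v\<in>C. 0 * (1 / real (card C)) \<le> (\<Sum>w\<in>C. M v w * (1 / real (card C)))"
        using nnC by (auto intro!: sum_nonneg)
    qed
    then show ?thesis using that by blast
  qed
  have nz0: "\<exists>v\<in>C. x0 v \<noteq> 0" using x0(2) by (metis sum.neutral zero_neq_one)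
  have p0: "0 < s0 \<and> (\<forall>v\<in>C. 0 < x0 v)" by (rule pos_eig[OF finC posM x0(1) nz0 x0(4)])
  have rho: "?\<rho> = s0" by (rule collatz_eq[OF finC Cne nnC _ x0(4)]) (use p0 in auto)
  define u where "u = (\<lambda>v. if v \<in> C then x0 v else 0)"
  have sumKC: "(\<Sum>w\<in>K. f w * u w) = (\<Sum>w\<in>C. f w * x0 w)" for f :: "'a \<Rightarrow> real"
  proof -
    have "(\<Sum>w\<in>K. f w * u w) = (\<Sum>w\<in>C. f w * u w)"
      by (rule sum.mono_neutral_right[OF finK CK]) (auto simp: u_def)
    also have "\<dots> = (\<Sum>w\<in>C. f w * x0 w)" by (rule sum.cong) (auto simp: u_def)
    finally show ?thesis .
  qed
  have Kne: "K \<noteq> {}" using Cne CK by auto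
  obtain x1 s1 where x1: "\<forall>v\<in>K. 0 \<le> x1 v" "(\<Sum>v\<in>K. x1 v) = 1" "?\<rho> \<le> s1"
     "\<forall>v\<in>K. (\<Sum>w\<in>K. M v w * x1 w) = s1 * x1 v"
  proof -
    have "\<exists>x s. (\<forall>v\<in>K. 0 \<le> x v) \<and> (\<Sum>v\<in>K. x v) = 1 \<and> ?\<rho> \<le> s \<and>
               (\<forall>v\<in>K. (\<Sum>w\<in>K. M v w * x w) = s * x v)"
    proof (rule pf_nonneg[OF finK Kne nnK, of u])
      show "\<forall>v\<in>K. 0 \<le> u v" using x0(1) by (auto simp: u_def)
      show "(\<Sum>v\<in>K. u v) = 1" using sumKC[of "\<lambda>_. 1"] x0(2) by simp
      show "\<forall>v\<in>K. ?\<rho> * u v \<le> (\<Sum>w\<in>K. M v w * u w)"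
      proof
        fix v assume v: "v \<in> K"
        show "?\<rho> * u v \<le> (\<Sum>w\<in>K. M v w * u w)"
        proof (cases "v \<in> C")
          case True
          then show ?thesis using sumKC[of "M v"] x0(4) rho by (simp add: u_def)
        next
          case False
          have "0 \<le> (\<Sum>w\<in>K. M v w * u w)" using nnK v x0(1) by (auto intro!: sum_nonneg simp: u_def)
          then show ?thesis using False by (simp add: u_def)
        qed
      qed
    qed
    then show ?thesis using that by blast
  qed
  have splitK: "(\<Sum>w\<in>K. M v w * x1 w) = (\<Sum>w\<in>C. M v w * x1 w) + (\<Sum>w\<in>K-C. M v w * x1 w)" for v
    using sum.subset_diff[OF CK finK, of "\<lambda>w. M v w * x1 w"] by (simp add: add.commute)
  have s1: "s1 = ?\<rho>"
  proof (cases "\<exists>c\<in>C. x1 c \<noteq> 0")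
    case True
    have "\<forall>v\<in>C. (\<Sum>w\<in>C. M v w * x1 w) = s1 * x1 v"
    proof
      fix v assume v: "v \<in> C"
      have "(\<Sum>w\<in>K-C. M v w * x1 w) = 0" using stM v unfolding struc_def by (auto intro!: sum.neutral)
      then show "(\<Sum>w\<in>C. M v w * x1 w) = s1 * x1 v" using splitK[of v] x1(4) v CK by auto
    qed
    then have "\<bar>s1\<bar> \<le> ?\<rho>" using real_eig_le[OF finC True] by blast
    then show ?thesis using x1(3) by simp
  next
    case False
    have "\<forall>v\<in>K-C. (\<Sum>w\<in>K-C. M v w * x1 w) = s1 * x1 v"
    proof
      fix v assume v: "v \<in> K - C"
      have "(\<Sum>w\<in>C. M v w * x1 w) = 0" using False by simp
      then show "(\<Sum>w\<in>K-C. M v w * x1 w) = s1 * x1 v" using splitK[of v] x1(4) v by auto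
    qed
    then have "\<forall>v\<in>K-C. x1 v = 0" using noeigD[OF h _ x1(3)] by blast
    then have "(\<Sum>v\<in>K. x1 v) = 0" using False by (intro sum.neutral) auto
    then show ?thesis using x1(2) by simp
  qed
  define x where "x = (\<lambda>v. if v \<in> K then x1 v else 0)"
  have x0K: "\<forall>w\<in>V-K. x w = 0" by (simp add: x_def)
  show ?thesis
  proof (rule exI[of _ x], unfold hv_def, intro conjI)
    show "\<forall>v. v \<notin> V \<longrightarrow> x v = 0" using KV by (auto simp: x_def)
    show "\<forall>v. 0 \<le> x v" using x1(1) by (simp add: x_def)
    show "(\<Sum>v\<in>V. x v) = 1" using sum_ifK[of "\<lambda>_. 1" x1] x1(2) by (simp add: x_def)
    show "\<forall>v\<in>V. v \<notin> K \<longrightarrow> x v = 0" by (simp add: x_def)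
    show "\<forall>v\<in>V. (\<Sum>w\<in>V. M v w * x w) = ?\<rho> * x v"
    proof
      fix v assume v: "v \<in> V"
      show "(\<Sum>w\<in>V. M v w * x w) = ?\<rho> * x v"
      proof (cases "v \<in> K")
        case True
        then show ?thesis using sum_ifK[of "M v" x1] x1(4) s1 by (simp add: x_def)
      next
        case False
        then show ?thesis using rowO[OF stM x0K] v by (simp add: x_def)
      qed
    qed
  qed
qed

lemma harm_transfer:
  fixes M G :: "'a \<Rightarrow> 'a \<Rightarrow> real"
  assumes stM: "struc V C K M" and stG: "struc V C K G"
    and comm: "\<forall>v\<in>V. \<forall>w\<in>V. (\<Sum>u\<in>V. M v u * G u w) = (\<Sum>u\<in>V. G v u * M u w)"
    and h: "harm K C M" and Dne: "K - C \<noteq> {}"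
  shows "spec_rad (K - C) G < spec_rad C G"
proof -
  obtain x where x: "hv V K C M x" using existence[OF stM h] by blast
  have xG: "hv V K C G x" by (rule transfer[OF stM stG comm h x])
  let ?\<rho> = "spec_rad C M"
  let ?\<sigma> = "spec_rad C G"
  have p: "0 < ?\<rho> \<and> (\<forall>v\<in>C. 0 < x v)" by (rule hv_pos[OF stM h x])
  have x0: "\<forall>w\<in>V-K. x w = 0" using x unfolding hv_def by auto
  have xn: "\<forall>v. 0 \<le> x v" using x unfolding hv_def by auto
  have DV: "\<And>v. v \<in> K - C \<Longrightarrow> v \<in> V" using KV by auto
  have CV: "\<And>v. v \<in> C \<Longrightarrow> v \<in> V" using CK KV by auto
  have lowC: "(\<Sum>w\<in>C. N v w * x w) > 0" if sN: "struc V C K N" and vD: "v \<in> K - C" for N :: "'a \<Rightarrow> 'a \<Rightarrow> real" and v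
  proof -
    have "\<forall>v\<in>K-C. \<exists>c\<in>C. 0 < N v c" using sN by (simp add: struc_def)
    then obtain c where c: "c \<in> C" "0 < N v c" using vD by blast
    have "N v c * x c \<le> (\<Sum>w\<in>C. N v w * x w)"
      by (rule member_le_sum[OF c(1) _ finC]) (use sN vD DV CV xn in \<open>auto simp: struc_def\<close>)
    moreover have "0 < N v c * x c" using c p by simp
    ultimately show ?thesis by simp
  qed
  have lowD: "0 \<le> (\<Sum>w\<in>K-C. N v w * x w)" if "struc V C K N" "v \<in> K - C" for N :: "'a \<Rightarrow> 'a \<Rightarrow> real" and v
    using that DV xn by (auto intro!: sum_nonneg simp: struc_def)
  have xD: "\<forall>v\<in>K-C. 0 < x v"
  proof
    fix v assume v: "v \<in> K - C"
    have "?\<rho> * x v = (\<Sum>w\<in>C. M v w * x w) + (\<Sum>w\<in>K-C. M v w * x w)"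
      using rowD[OF x0, of M v] x DV[OF v] unfolding hv_def by auto
    then have "0 < ?\<rho> * x v" using lowC[OF stM v] lowD[OF stM v] by linarith
    then show "0 < x v" using p by (simp add: zero_less_mult_iff)
  qed
  have lt: "\<forall>v\<in>K-C. (\<Sum>w\<in>K-C. G v w * x w) < ?\<sigma> * x v"
  proof
    fix v assume v: "v \<in> K - C"
    have "?\<sigma> * x v = (\<Sum>w\<in>C. G v w * x w) + (\<Sum>w\<in>K-C. G v w * x w)"
      using rowD[OF x0, of G v] xG DV[OF v] unfolding hv_def by auto
    then show "(\<Sum>w\<in>K-C. G v w * x w) < ?\<sigma> * x v" using lowC[OF stG v] by linarith
  qed
  have nnG: "\<forall>v\<in>K-C. \<forall>w\<in>K-C. 0 \<le> G v w" using stG DV unfolding struc_def by auto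
  show ?thesis by (rule collatz_strict[OF finD Dne nnG xD lt])
qed

end

context
  fixes k :: nat and L :: "'a set" and r s :: "'a \<Rightarrow> 'a" and cmp :: "'a \<Rightarrow> 'a \<Rightarrow> 'a"
    and d :: "'a \<Rightarrow> nat \<Rightarrow> nat"
  assumes kg: "kgraph k L r s cmp d"
begin

lemma kg_L: "l \<in> L \<Longrightarrow> r l \<in> L \<and> s l \<in> L \<and> d l \<in> degs k"
  using kg[unfolded kgraph_def, THEN conjunct2, THEN conjunct1] by blast
lemma kg_rs: "l \<in> L \<Longrightarrow> r (r l) = r l \<and> s (r l) = r l \<and> r (s l) = s l \<and> s (s l) = s l"
  using kg[unfolded kgraph_def, THEN conjunct2, THEN conjunct2, THEN conjunct1] by blast
lemma kg_id: "l \<in> L \<Longrightarrow> cmp (r l) l = l \<and> cmp l (s l) = l"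
  using kg[unfolded kgraph_def, THEN conjunct2, THEN conjunct2, THEN conjunct2, THEN conjunct1] by blast
lemma kg_cmp: "m \<in> L \<Longrightarrow> n \<in> L \<Longrightarrow> s m = r n \<Longrightarrow> cmp m n \<in> L \<and> r (cmp m n) = r m \<and> s (cmp m n) = s n"
  using kg[unfolded kgraph_def, THEN conjunct2, THEN conjunct2, THEN conjunct2, THEN conjunct2, THEN conjunct1] by blast
lemma kg_d0: "l \<in> L \<Longrightarrow> d (r l) = (\<lambda>_. 0)"
  using kg[unfolded kgraph_def, THEN conjunct2, THEN conjunct2, THEN conjunct2, THEN conjunct2, THEN conjunct2, THEN conjunct2, THEN conjunct1] by blast
lemma kg_dcmp: "m \<in> L \<Longrightarrow> n \<in> L \<Longrightarrow> s m = r n \<Longrightarrow> d (cmp m n) = (\<lambda>i. d m i + d n i)"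
  using kg[unfolded kgraph_def, THEN conjunct2, THEN conjunct2, THEN conjunct2, THEN conjunct2, THEN conjunct2, THEN conjunct2, THEN conjunct2, THEN conjunct1] by blast
lemma kg_uf: "l \<in> L \<Longrightarrow> d l = (\<lambda>i. m i + n i) \<Longrightarrow>
        (\<exists>!p. fst p \<in> L \<and> snd p \<in> L \<and> s (fst p) = r (snd p) \<and>
              d (fst p) = m \<and> d (snd p) = n \<and> l = cmp (fst p) (snd p))"
  using kg[unfolded kgraph_def, THEN conjunct2, THEN conjunct2, THEN conjunct2, THEN conjunct2,
      THEN conjunct2, THEN conjunct2, THEN conjunct2, THEN conjunct2, rule_format] .

lemma kg_ds0: "l \<in> L \<Longrightarrow> d (s l) = (\<lambda>_. 0)"
  using kg_d0[of "s l"] kg_L[of l] kg_rs[of l] by simp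

lemma ex1_two: "(\<exists>!p. P p) \<Longrightarrow> P a \<Longrightarrow> P b \<Longrightarrow> a = b" by blast

lemma kg_vertex:
  assumes l: "l \<in> L" and d0: "d l = (\<lambda>_. 0)"
  shows "r l = l \<and> s l = l"
proof -
  define P where "P = (\<lambda>p. fst p \<in> L \<and> snd p \<in> L \<and> s (fst p) = r (snd p) \<and>
              d (fst p) = (\<lambda>_::nat. 0::nat) \<and> d (snd p) = (\<lambda>_::nat. 0::nat) \<and> l = cmp (fst p) (snd p))"
  have u: "\<exists>!p. P p"
    using kg_uf[OF l, of "\<lambda>_. 0" "\<lambda>_. 0"] d0 unfolding P_def by simp
  have p1: "P (r l, l)" unfolding P_def
    using l kg_L[OF l] kg_rs[OF l] kg_d0[OF l] d0 kg_id[OF l] by simp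
  have p2: "P (l, s l)" unfolding P_def
    using l kg_L[OF l] kg_rs[OF l] kg_ds0[OF l] d0 kg_id[OF l] by simp
  have "(r l, l) = (l, s l)" by (rule ex1_two[OF u p1 p2])
  then show ?thesis by simp
qed

definition Pset :: "(nat \<Rightarrow> nat) \<Rightarrow> 'a \<Rightarrow> 'a \<Rightarrow> 'a set" where
  "Pset n v w = {l\<in>paths_deg L d n. r l = v \<and> s l = w}"

lemma vmat_Pset: "vmat L r s d i v w = real (card (Pset (unitdeg i) v w))"
  by (simp add: vmat_def Pset_def)

lemma mmult_vmat:
  assumes fk: "finite_kgraph L d" and v: "v \<in> verts L d" and w: "w \<in> verts L d"
  shows "mmult (verts L d) (vmat L r s d i) (vmat L r s d j) v w
         = real (card (Pset (\<lambda>x. unitdeg i x + unitdeg j x) v w))"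
proof -
  let ?V = "verts L d"
  have finV: "finite ?V" using fk unfolding finite_kgraph_def verts_def by blast
  have finP: "finite (Pset n a b)" for n a b
    using fk unfolding finite_kgraph_def Pset_def by auto
  have "mmult ?V (vmat L r s d i) (vmat L r s d j) v w
        = (\<Sum>u\<in>?V. real (card (Pset (unitdeg i) v u \<times> Pset (unitdeg j) u w)))"
    by (simp add: mmult_def vmat_Pset card_cartesian_product)
  also have "\<dots> = real (\<Sum>u\<in>?V. card (Pset (unitdeg i) v u \<times> Pset (unitdeg j) u w))" by simp
  also have "(\<Sum>u\<in>?V. card (Pset (unitdeg i) v u \<times> Pset (unitdeg j) u w))
        = card (\<Union>u\<in>?V. Pset (unitdeg i) v u \<times> Pset (unitdeg j) u w)"
  proof (rule card_UN_disjoint[symmetric])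
    show "finite ?V" by (rule finV)
    show "\<forall>u\<in>?V. finite (Pset (unitdeg i) v u \<times> Pset (unitdeg j) u w)" using finP by simp
    show "\<forall>u\<in>?V. \<forall>u'\<in>?V. u \<noteq> u' \<longrightarrow>
      (Pset (unitdeg i) v u \<times> Pset (unitdeg j) u w) \<inter> (Pset (unitdeg i) v u' \<times> Pset (unitdeg j) u' w) = {}"
      by (auto simp: Pset_def)
  qed
  also have "card (\<Union>u\<in>?V. Pset (unitdeg i) v u \<times> Pset (unitdeg j) u w)
        = card (Pset (\<lambda>x. unitdeg i x + unitdeg j x) v w)"
  proof (rule bij_betw_same_card[of "\<lambda>p. cmp (fst p) (snd p)"])
    let ?A = "\<Union>u\<in>?V. Pset (unitdeg i) v u \<times> Pset (unitdeg j) u w"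
    have memA: "p \<in> ?A \<longleftrightarrow> fst p \<in> L \<and> snd p \<in> L \<and> s (fst p) = r (snd p) \<and>
              d (fst p) = unitdeg i \<and> d (snd p) = unitdeg j \<and> r (fst p) = v \<and> s (snd p) = w" for p
    proof
      assume "p \<in> ?A" then show "fst p \<in> L \<and> snd p \<in> L \<and> s (fst p) = r (snd p) \<and>
              d (fst p) = unitdeg i \<and> d (snd p) = unitdeg j \<and> r (fst p) = v \<and> s (snd p) = w"
        by (auto simp: Pset_def paths_deg_def)
    next
      assume a: "fst p \<in> L \<and> snd p \<in> L \<and> s (fst p) = r (snd p) \<and>
              d (fst p) = unitdeg i \<and> d (snd p) = unitdeg j \<and> r (fst p) = v \<and> s (snd p) = w"
      then have "s (fst p) \<in> ?V" using kg_L[of "fst p"] kg_ds0[of "fst p"] by (simp add: verts_def paths_deg_def)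
      then show "p \<in> ?A" using a by (auto simp: Pset_def paths_deg_def intro!: bexI[of _ "s (fst p)"] mem_Times_iff[THEN iffD2])
    qed
    show "bij_betw (\<lambda>p. cmp (fst p) (snd p)) ?A (Pset (\<lambda>x. unitdeg i x + unitdeg j x) v w)"
    proof (rule bij_betw_imageI)
      show "inj_on (\<lambda>p. cmp (fst p) (snd p)) ?A"
      proof (rule inj_onI)
        fix p q assume p: "p \<in> ?A" and q: "q \<in> ?A" and e: "cmp (fst p) (snd p) = cmp (fst q) (snd q)"
        have pp: "fst p \<in> L \<and> snd p \<in> L \<and> s (fst p) = r (snd p) \<and>
              d (fst p) = unitdeg i \<and> d (snd p) = unitdeg j" using p memA by blast
        have qq: "fst q \<in> L \<and> snd q \<in> L \<and> s (fst q) = r (snd q) \<and>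
              d (fst q) = unitdeg i \<and> d (snd q) = unitdeg j" using q memA by blast
        let ?l = "cmp (fst p) (snd p)"
        have lL: "?l \<in> L" using kg_cmp pp by blast
        have dl: "d ?l = (\<lambda>x. unitdeg i x + unitdeg j x)" using kg_dcmp pp by simp
        have "\<exists>!p. fst p \<in> L \<and> snd p \<in> L \<and> s (fst p) = r (snd p) \<and>
              d (fst p) = unitdeg i \<and> d (snd p) = unitdeg j \<and> ?l = cmp (fst p) (snd p)"
          by (rule kg_uf[OF lL dl])
        then show "p = q" using pp qq e by blast
      qed
      show "(\<lambda>p. cmp (fst p) (snd p)) ` ?A = Pset (\<lambda>x. unitdeg i x + unitdeg j x) v w"
      proof
        show "(\<lambda>p. cmp (fst p) (snd p)) ` ?A \<subseteq> Pset (\<lambda>x. unitdeg i x + unitdeg j x) v w"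
        proof
          fix l assume "l \<in> (\<lambda>p. cmp (fst p) (snd p)) ` ?A"
          then obtain p where p: "p \<in> ?A" and l: "l = cmp (fst p) (snd p)" by blast
          have pp: "fst p \<in> L \<and> snd p \<in> L \<and> s (fst p) = r (snd p) \<and>
              d (fst p) = unitdeg i \<and> d (snd p) = unitdeg j \<and> r (fst p) = v \<and> s (snd p) = w"
            using p memA by blast
          then show "l \<in> Pset (\<lambda>x. unitdeg i x + unitdeg j x) v w"
            using kg_cmp[of "fst p" "snd p"] kg_dcmp[of "fst p" "snd p"] l
            by (simp add: Pset_def paths_deg_def)
        qed
        show "Pset (\<lambda>x. unitdeg i x + unitdeg j x) v w \<subseteq> (\<lambda>p. cmp (fst p) (snd p)) ` ?A"
        proof
          fix l assume l: "l \<in> Pset (\<lambda>x. unitdeg i x + unitdeg j x) v w"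
          then have lL: "l \<in> L" and dl: "d l = (\<lambda>x. unitdeg i x + unitdeg j x)" and rl: "r l = v" and sl: "s l = w"
            by (auto simp: Pset_def paths_deg_def)
          obtain p where pp: "fst p \<in> L \<and> snd p \<in> L \<and> s (fst p) = r (snd p) \<and>
              d (fst p) = unitdeg i \<and> d (snd p) = unitdeg j \<and> l = cmp (fst p) (snd p)"
            using kg_uf[OF lL dl] by blast
          have "r (fst p) = v" "s (snd p) = w" using kg_cmp[of "fst p" "snd p"] pp rl sl by auto
          then have "p \<in> ?A" using pp memA by blast
          then show "l \<in> (\<lambda>p. cmp (fst p) (snd p)) ` ?A" using pp by blast
        qed
      qed
    qed
  qed
  finally show ?thesis .
qed

lemma vmat_comm:
  assumes fk: "finite_kgraph L d" and v: "v \<in> verts L d" and w: "w \<in> verts L d"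
  shows "mmult (verts L d) (vmat L r s d i) (vmat L r s d j) v w
       = mmult (verts L d) (vmat L r s d j) (vmat L r s d i) v w"
proof -
  have e: "(\<lambda>x. unitdeg i x + unitdeg j x) = (\<lambda>x. unitdeg j x + unitdeg i x)"
    by (rule ext) (rule add.commute)
  show ?thesis unfolding mmult_vmat[OF fk v w, of i j] mmult_vmat[OF fk v w, of j i] e ..
qed

end

definition cm :: "'a set \<Rightarrow> ('a \<Rightarrow> 'a \<Rightarrow> real) \<Rightarrow> ('a \<Rightarrow> 'a \<Rightarrow> real) \<Rightarrow> bool" where
  "cm V X Y \<longleftrightarrow> (\<forall>v\<in>V. \<forall>w\<in>V. mmult V X Y v w = mmult V Y X v w)"

lemma mmult_assoc: "mmult V (mmult V X Y) Z = mmult V X (mmult V Y Z)"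
proof (intro ext)
  fix v w
  have "mmult V (mmult V X Y) Z v w = (\<Sum>u\<in>V. \<Sum>t\<in>V. X v t * Y t u * Z u w)"
    by (simp add: mmult_def sum_distrib_right)
  also have "\<dots> = (\<Sum>t\<in>V. \<Sum>u\<in>V. X v t * Y t u * Z u w)" by (rule sum.swap)
  also have "\<dots> = mmult V X (mmult V Y Z) v w"
    by (simp add: mmult_def sum_distrib_left mult.assoc)
  finally show "mmult V (mmult V X Y) Z v w = mmult V X (mmult V Y Z) v w" .
qed

lemma mmult_congL: "(\<forall>u\<in>V. X v u = X' v u) \<Longrightarrow> mmult V X Y v w = mmult V X' Y v w"
  by (simp add: mmult_def)
lemma mmult_congR: "(\<forall>u\<in>V. Y u w = Y' u w) \<Longrightarrow> mmult V X Y v w = mmult V X Y' v w"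
  by (simp add: mmult_def)

lemma cm_sym: "cm V X Y \<Longrightarrow> cm V Y X" by (simp add: cm_def)

lemma cm_mult:
  assumes "cm V X Y" "cm V X Z"
  shows "cm V X (mmult V Y Z)"
  unfolding cm_def
proof (intro ballI)
  fix v w assume v: "v \<in> V" and w: "w \<in> V"
  have "mmult V X (mmult V Y Z) v w = mmult V (mmult V X Y) Z v w" by (simp add: mmult_assoc)
  also have "\<dots> = mmult V (mmult V Y X) Z v w"
    by (rule mmult_congL) (use assms(1) v in \<open>simp add: cm_def\<close>)
  also have "\<dots> = mmult V Y (mmult V X Z) v w" by (simp add: mmult_assoc)
  also have "\<dots> = mmult V Y (mmult V Z X) v w"
    by (rule mmult_congR) (use assms(2) w in \<open>simp add: cm_def\<close>)
  also have "\<dots> = mmult V (mmult V Y Z) X v w" by (simp add: mmult_assoc)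
  finally show "mmult V X (mmult V Y Z) v w = mmult V (mmult V Y Z) X v w" .
qed

lemma cm_one:
  assumes "finite V"
  shows "cm V X mone"
  unfolding cm_def
proof (intro ballI)
  fix v w assume v: "v \<in> V" and w: "w \<in> V"
  have "mmult V X mone v w = (\<Sum>u\<in>V. if u = w then X v u else 0)"
    unfolding mmult_def mone_def by (rule sum.cong) auto
  also have "\<dots> = X v w" using assms w by simp
  also have "\<dots> = (\<Sum>u\<in>V. if v = u then X u w else 0)" using assms v by simp
  also have "\<dots> = mmult V mone X v w" unfolding mmult_def mone_def by (rule sum.cong) auto
  finally show "mmult V X mone v w = mmult V mone X v w" .
qed

lemma cm_mpow:
  assumes "finite V" "cm V X Y"
  shows "cm V X (mpow V Y n)"
  by (induction n) (auto intro: cm_mult cm_one assms)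

lemma cm_foldr:
  assumes "finite V" "\<forall>i\<in>set is. cm V X (A i)"
  shows "cm V X (foldr (\<lambda>i M. mmult V (mpow V (A i) (n i)) M) is mone)"
  using assms(2)
proof (induction "is")
  case Nil
  then show ?case using cm_one[OF assms(1)] by simp
next
  case (Cons a "is")
  then show ?case by (auto intro!: cm_mult cm_mpow assms(1))
qed

lemma mmult_sumL: "mmult V (\<lambda>v w. \<Sum>a\<leftarrow>F. X a v w) Y v w = (\<Sum>a\<leftarrow>F. mmult V (X a) Y v w)"
  by (induction F) (simp_all add: mmult_def sum.distrib distrib_right)
lemma mmult_sumR: "mmult V Y (\<lambda>v w. \<Sum>a\<leftarrow>F. X a v w) v w = (\<Sum>a\<leftarrow>F. mmult V Y (X a) v w)"
  by (induction F) (simp_all add: mmult_def sum.distrib distrib_left)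

lemma sum_list_swap: "(\<Sum>a\<leftarrow>F. \<Sum>b\<leftarrow>G. f a b) = (\<Sum>b\<leftarrow>G. \<Sum>a\<leftarrow>F. f a b :: real)"
proof (induction F)
  case Nil
  then show ?case by (induction G) simp_all
next
  case (Cons a F)
  then show ?case by (simp add: sum_list_addf)
qed

lemma cm_AF:
  fixes A :: "nat \<Rightarrow> 'a \<Rightarrow> 'a \<Rightarrow> real"
  assumes fin: "finite V" and comm: "\<forall>i j. cm V (A i) (A j)"
  shows "cm V (\<lambda>v w. \<Sum>a\<leftarrow>F. foldr (\<lambda>i M. mmult V (mpow V (A i) (a i)) M) [0..<k] mone v w)
              (\<lambda>v w. \<Sum>a\<leftarrow>G. foldr (\<lambda>i M. mmult V (mpow V (A i) (a i)) M) [0..<k] mone v w)"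
proof -
  define P where "P = (\<lambda>a. foldr (\<lambda>i M. mmult V (mpow V (A i) (a i)) M) [0..<k] mone)"
  have c1: "cm V (A i) (P b)" for i b unfolding P_def by (rule cm_foldr[OF fin]) (use comm in auto)
  have c2: "cm V (P a) (P b)" for a b
  proof -
    have "cm V (P b) (P a)" unfolding P_def
      by (rule cm_foldr[OF fin]) (use c1[unfolded P_def] cm_sym in blast)
    then show ?thesis by (rule cm_sym)
  qed
  have main: "cm V (\<lambda>v w. \<Sum>a\<leftarrow>F. P a v w) (\<lambda>v w. \<Sum>a\<leftarrow>G. P a v w)"
    unfolding cm_def
  proof (intro ballI)
    fix v w assume v: "v \<in> V" and w: "w \<in> V"
    have "mmult V (\<lambda>v w. \<Sum>a\<leftarrow>F. P a v w) (\<lambda>v w. \<Sum>a\<leftarrow>G. P a v w) v w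
          = (\<Sum>a\<leftarrow>F. \<Sum>b\<leftarrow>G. mmult V (P a) (P b) v w)" by (simp add: mmult_sumL mmult_sumR)
    also have "\<dots> = (\<Sum>a\<leftarrow>F. \<Sum>b\<leftarrow>G. mmult V (P b) (P a) v w)"
      using c2 v w unfolding cm_def by simp
    also have "\<dots> = (\<Sum>b\<leftarrow>G. \<Sum>a\<leftarrow>F. mmult V (P b) (P a) v w)" by (rule sum_list_swap)
    also have "\<dots> = mmult V (\<lambda>v w. \<Sum>a\<leftarrow>G. P a v w) (\<lambda>v w. \<Sum>a\<leftarrow>F. P a v w) v w"
      by (simp add: mmult_sumL mmult_sumR)
    finally show "mmult V (\<lambda>v w. \<Sum>a\<leftarrow>F. P a v w) (\<lambda>v w. \<Sum>a\<leftarrow>G. P a v w) v w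
          = mmult V (\<lambda>v w. \<Sum>a\<leftarrow>G. P a v w) (\<lambda>v w. \<Sum>a\<leftarrow>F. P a v w) v w" .
  qed
  then show ?thesis unfolding P_def .
qed

lemma mmult_nn: "(\<forall>v w. 0 \<le> X v w) \<Longrightarrow> (\<forall>v w. 0 \<le> Y v w) \<Longrightarrow> 0 \<le> mmult V X Y v w"
  by (simp add: mmult_def sum_nonneg)

lemma mpow_nn: "(\<forall>v w. 0 \<le> X v w) \<Longrightarrow> 0 \<le> mpow V X n v w"
proof (induction n arbitrary: v w)
  case 0 then show ?case by (simp add: mone_def)
next
  case (Suc n) then show ?case by (simp add: mmult_nn)
qed

lemma foldr_nn:
  assumes "\<forall>i v w. 0 \<le> A i v w"
  shows "0 \<le> foldr (\<lambda>i M. mmult V (mpow V (A i) (n i)) M) is mone v w"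
proof (induction "is" arbitrary: v w)
  case Nil then show ?case by (simp add: mone_def)
next
  case (Cons a "is") then show ?case using assms by (simp add: mmult_nn mpow_nn)
qed

context
  fixes k :: nat and L :: "'a set" and r s :: "'a \<Rightarrow> 'a" and cmp :: "'a \<Rightarrow> 'a \<Rightarrow> 'a"
    and d :: "'a \<Rightarrow> nat \<Rightarrow> nat"
  assumes kg: "kgraph k L r s cmp d" and fk: "finite_kgraph L d"
begin

lemma finV: "finite (verts L d)"
  using fk unfolding finite_kgraph_def verts_def by blast

lemma vertsL: "v \<in> verts L d \<Longrightarrow> v \<in> L \<and> d v = (\<lambda>_. 0)"
  by (simp add: verts_def paths_deg_def)

lemma vert_rs: "v \<in> verts L d \<Longrightarrow> r v = v \<and> s v = v"
  using kg_vertex[OF kg] vertsL by blast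

lemma vle_trans: "vle L r s a b \<Longrightarrow> vle L r s b c \<Longrightarrow> vle L r s a c"
  unfolding vle_def using kg_cmp[OF kg] by metis

lemma vle_refl: "v \<in> verts L d \<Longrightarrow> vle L r s v v"
  unfolding vle_def using vertsL vert_rs by blast

lemma nzpath: "p \<in> L \<Longrightarrow> r p \<noteq> s p \<Longrightarrow> d p \<noteq> (\<lambda>_. 0)"
  using kg_vertex[OF kg] by metis

lemma nz_cmp: "m \<in> L \<Longrightarrow> n \<in> L \<Longrightarrow> s m = r n \<Longrightarrow> (d m \<noteq> (\<lambda>_. 0) \<or> d n \<noteq> (\<lambda>_. 0)) \<Longrightarrow> d (cmp m n) \<noteq> (\<lambda>_. 0)"
  using kg_dcmp[OF kg, of m n] by (auto simp: fun_eq_iff)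

lemma AF_nn: "0 \<le> AF k L r s d F v w"
  unfolding AF_def vmat_pow_def
  by (rule sum_list_nonneg) (auto intro!: foldr_nn simp: vmat_def)

context
  fixes F :: "(nat \<Rightarrow> nat) list"
  assumes wc: "well_chosen k L r s d F"
begin

lemma wc_path:
  assumes "v \<in> verts L d" "w \<in> verts L d" "0 < AF k L r s d F v w"
  shows "\<exists>p\<in>L. r p = v \<and> s p = w"
  using wc assms unfolding well_chosen_def by (auto simp: paths_deg_def)

lemma wc_pos:
  assumes "v \<in> verts L d" "w \<in> verts L d" "p \<in> L" "r p = v" "s p = w" "d p \<noteq> (\<lambda>_. 0)"
  shows "0 < AF k L r s d F v w"
proof -
  have "d p \<in> degs k" using kg_L[OF kg assms(3)] by simp
  moreover have "p \<in> {q\<in>paths_deg L d (d p). r q = v \<and> s q = w}" using assms by (simp add: paths_deg_def)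
  ultimately show ?thesis using wc assms(1,2,6) unfolding well_chosen_def by blast
qed

lemma wc_zero:
  assumes "v \<in> verts L d" "w \<in> verts L d" "\<not> (\<exists>p\<in>L. r p = v \<and> s p = w)"
  shows "AF k L r s d F v w = 0"
  using wc_path[OF assms(1,2)] assms(3) AF_nn[of F v w] by force

lemma struc_AF:
  fixes v0 :: 'a
  defines "C \<equiv> {w\<in>verts L d. vsim L r s v0 w}"
  assumes v0: "v0 \<in> verts L d" and nt: "\<not> trivial_comp L r s C"
  shows "struc (verts L d) C (vclosure L r s d C) (AF k L r s d F)"
proof -
  let ?V = "verts L d"
  let ?K = "vclosure L r s d C"
  let ?B = "AF k L r s d F"
  have CV: "C \<subseteq> ?V" unfolding C_def by auto
  have Cvle: "vle L r s a b" if "a \<in> C" "b \<in> C" for a b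
    using that vle_trans unfolding C_def vsim_def by blast
  have Kdef: "w \<in> ?K \<longleftrightarrow> w \<in> ?V \<and> (\<exists>l\<in>L. r l = w \<and> s l \<in> C)" for w
    by (simp add: vclosure_def)
  have posC: "\<forall>v\<in>C. \<forall>w\<in>C. 0 < ?B v w"
  proof (intro ballI)
    fix v w assume v: "v \<in> C" and w: "w \<in> C"
    show "0 < ?B v w"
    proof (cases "v = w")
      case False
      obtain p where p: "p \<in> L" "r p = v" "s p = w" using Cvle[OF v w] unfolding vle_def by blast
      show ?thesis by (rule wc_pos) (use p v w CV False nzpath in auto)
    next
      case True
      have vL: "v \<in> L" "r v = v" "s v = v" using v CV vertsL vert_rs by auto
      have "{l\<in>L. r l \<in> C \<and> s l \<in> C} \<noteq> {v}" using nt unfolding trivial_comp_def by blast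
      moreover have "v \<in> {l\<in>L. r l \<in> C \<and> s l \<in> C}" using vL v by simp
      ultimately obtain l where l: "l \<in> L" "r l \<in> C" "s l \<in> C" "l \<noteq> v" by blast
      have "\<exists>p\<in>L. r p = v \<and> s p = v \<and> d p \<noteq> (\<lambda>_. 0)"
      proof (cases "d l = (\<lambda>_. 0)")
        case False
        obtain n where n: "n \<in> L" "r n = v" "s n = r l" using Cvle[OF v l(2)] unfolding vle_def by blast
        obtain m where m: "m \<in> L" "r m = s l" "s m = v" using Cvle[OF l(3) v] unfolding vle_def by blast
        have lm: "cmp l m \<in> L" "r (cmp l m) = r l" "s (cmp l m) = v" "d (cmp l m) \<noteq> (\<lambda>_. 0)"
          using kg_cmp[OF kg l(1) m(1)] m nz_cmp[OF l(1) m(1)] False by auto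
        have "cmp n (cmp l m) \<in> L" "r (cmp n (cmp l m)) = v" "s (cmp n (cmp l m)) = v"
             "d (cmp n (cmp l m)) \<noteq> (\<lambda>_. 0)"
          using kg_cmp[OF kg n(1) lm(1)] n lm nz_cmp[OF n(1) lm(1)] by auto
        then show ?thesis by blast
      next
        case True
        have lrs: "r l = l" "s l = l" using kg_vertex[OF kg l(1) True] by auto
        then have lC: "l \<in> C" using l by simp
        obtain p1 where p1: "p1 \<in> L" "r p1 = v" "s p1 = l" using Cvle[OF v lC] unfolding vle_def by blast
        obtain p2 where p2: "p2 \<in> L" "r p2 = l" "s p2 = v" using Cvle[OF lC v] unfolding vle_def by blast
        have d1: "d p1 \<noteq> (\<lambda>_. 0)" using nzpath[OF p1(1)] p1 l(4) by auto
        have "cmp p1 p2 \<in> L" "r (cmp p1 p2) = v" "s (cmp p1 p2) = v" "d (cmp p1 p2) \<noteq> (\<lambda>_. 0)"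
          using kg_cmp[OF kg p1(1) p2(1)] p1 p2 nz_cmp[OF p1(1) p2(1)] d1 by auto
        then show ?thesis by blast
      qed
      then obtain p where p: "p \<in> L" "r p = v" "s p = v" "d p \<noteq> (\<lambda>_. 0)" by blast
      show ?thesis unfolding True[symmetric] by (rule wc_pos) (use p v CV in auto)
    qed
  qed
  have out: "\<forall>v\<in>?V-?K. \<forall>w\<in>?K. ?B v w = 0"
  proof (intro ballI)
    fix v w assume v: "v \<in> ?V - ?K" and w: "w \<in> ?K"
    have "\<not> (\<exists>p\<in>L. r p = v \<and> s p = w)"
    proof
      assume "\<exists>p\<in>L. r p = v \<and> s p = w"
      then obtain p where p: "p \<in> L" "r p = v" "s p = w" by blast
      obtain l where l: "l \<in> L" "r l = w" "s l \<in> C" using w Kdef by blast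
      have "cmp p l \<in> L" "r (cmp p l) = v" "s (cmp p l) \<in> C" using kg_cmp[OF kg p(1) l(1)] p l by auto
      then have "v \<in> ?K" using v Kdef by blast
      then show False using v by simp
    qed
    then show "?B v w = 0" by (rule wc_zero[rotated 2]) (use v w Kdef in auto)
  qed
  have CD: "\<forall>v\<in>C. \<forall>w\<in>?K-C. ?B v w = 0"
  proof (intro ballI)
    fix v w assume v: "v \<in> C" and w: "w \<in> ?K - C"
    have "\<not> (\<exists>p\<in>L. r p = v \<and> s p = w)"
    proof
      assume "\<exists>p\<in>L. r p = v \<and> s p = w"
      then have vw: "vle L r s v w" unfolding vle_def by blast
      obtain l where l: "l \<in> L" "r l = w" "s l \<in> C" using w Kdef by blast
      have wc': "vle L r s w (s l)" using l unfolding vle_def by blast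
      have "vle L r s v0 w" using vle_trans vw v unfolding C_def vsim_def by blast
      moreover have "vle L r s w v0" using vle_trans wc' l(3) unfolding C_def vsim_def by blast
      ultimately have "w \<in> C" using w Kdef unfolding C_def vsim_def by blast
      then show False using w by simp
    qed
    then show "?B v w = 0" by (rule wc_zero[rotated 2]) (use v w CV Kdef in auto)
  qed
  have Dr: "\<forall>v\<in>?K-C. \<exists>c\<in>C. 0 < ?B v c"
  proof
    fix v assume v: "v \<in> ?K - C"
    obtain l where l: "l \<in> L" "r l = v" "s l \<in> C" using v Kdef by blast
    have "r l \<noteq> s l" using l v by auto
    then have "d l \<noteq> (\<lambda>_. 0)" using nzpath[OF l(1)] by simp
    then have "0 < ?B v (s l)" by (intro wc_pos[OF _ _ l(1)]) (use l v CV Kdef in auto)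
    then show "\<exists>c\<in>C. 0 < ?B v c" using l(3) by blast
  qed
  show ?thesis unfolding struc_def using AF_nn posC out CD Dr by blast
qed

end

lemma AF_comm:
  "\<forall>v\<in>verts L d. \<forall>w\<in>verts L d. (\<Sum>u\<in>verts L d. AF k L r s d F v u * AF k L r s d G u w)
                                 = (\<Sum>u\<in>verts L d. AF k L r s d G v u * AF k L r s d F u w)"
proof -
  have c: "\<forall>i j. cm (verts L d) (vmat L r s d i) (vmat L r s d j)"
    unfolding cm_def using vmat_comm[OF kg fk] by blast
  have e: "AF k L r s d H = (\<lambda>v w. \<Sum>a\<leftarrow>H. foldr (\<lambda>i M. mmult (verts L d) (mpow (verts L d) (vmat L r s d i) (a i)) M) [0..<k] mone v w)" for H
    by (simp add: AF_def vmat_pow_def)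
  have "cm (verts L d) (AF k L r s d F) (AF k L r s d G)"
    unfolding e by (rule cm_AF[OF finV c])
  then show ?thesis unfolding cm_def mmult_def .
qed

end

theorem corollary7p10:
  fixes k :: nat and L :: "'a set" and r s :: "'a \<Rightarrow> 'a"
    and cmp :: "'a \<Rightarrow> 'a \<Rightarrow> 'a" and d :: "'a \<Rightarrow> nat \<Rightarrow> nat"
    and C :: "'a set" and F F' :: "(nat \<Rightarrow> nat) list"
  assumes "kgraph k L r s cmp d"
    and "finite_kgraph L d"
    and "no_sources k L r d"
    and "is_component L r s d C"
    and "positive_comp k L r s d C"
    and "well_chosen k L r s d F"
    and "harmonic k L r s d F C"
    and "well_chosen k L r s d F'"
  shows "harmonic k L r s d F' C \<and> harm_vec k L r s d F C = harm_vec k L r s d F' C"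
proof -
  note kg = assms(1) and fk = assms(2) and wcF = assms(6) and hF = assms(7) and wcF' = assms(8)
  let ?V = "verts L d"
  let ?K = "vclosure L r s d C"
  let ?B = "AF k L r s d F"
  let ?B' = "AF k L r s d F'"
  obtain v0 where v0: "v0 \<in> ?V" and Cdef: "C = {w\<in>?V. vsim L r s v0 w}"
    using assms(4) unfolding is_component_def by blast
  have nt: "\<not> trivial_comp L r s C" using hF by (simp add: harmonic_def)
  have "vsim L r s v0 v0" using vle_refl[OF kg fk v0] by (simp add: vsim_def)
  then have v0C: "v0 \<in> C" using Cdef v0 by simp
  have CV: "C \<subseteq> ?V" using Cdef by auto
  have CK: "C \<subseteq> ?K"
  proof
    fix c assume c: "c \<in> C"
    then have "c \<in> ?V" using CV by auto
    moreover have "c \<in> L" "r c = c" "s c = c" using vertsL[OF kg fk \<open>c \<in> ?V\<close>] vert_rs[OF kg fk \<open>c \<in> ?V\<close>] by auto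
    ultimately show "c \<in> ?K" using c unfolding vclosure_def by auto
  qed
  have KV: "?K \<subseteq> ?V" unfolding vclosure_def by auto
  interpret base ?V C ?K
    by unfold_locales (use finV[OF kg fk] CK KV v0C in auto)
  have stF: "struc ?V C ?K ?B" using struc_AF[OF kg fk wcF v0] nt Cdef by simp
  have stF': "struc ?V C ?K ?B'" using struc_AF[OF kg fk wcF' v0] nt Cdef by simp
  have hB: "harm ?K C ?B" using hF by (simp add: harmonic_def harm_def)
  have hB': "harm ?K C ?B'"
  proof (cases "?K - C = {}")
    case True then show ?thesis by (simp add: harm_def)
  next
    case False
    show ?thesis unfolding harm_def
      using harm_transfer[OF stF stF' AF_comm[OF kg fk] hB False] by blast
  qed
  have harmF': "harmonic k L r s d F' C" using nt hB' by (simp add: harmonic_def harm_def)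
  have ihv: "is_harm_vec k L r s d H C = hv ?V ?K C (AF k L r s d H)" for H
    by (rule ext) (simp add: is_harm_vec_def hv_def)
  have eqP: "is_harm_vec k L r s d F C = is_harm_vec k L r s d F' C"
  proof (rule ext, unfold ihv)
    fix x
    show "hv ?V ?K C ?B x = hv ?V ?K C ?B' x"
      using transfer[OF stF stF' AF_comm[OF kg fk] hB] transfer[OF stF' stF AF_comm[OF kg fk] hB'] by blast
  qed
  show ?thesis using harmF' eqP unfolding harm_vec_def by simp
qed

end
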